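(* Let $n\ge1$, $t>0$. For $\lambda>0$ and $(\mathbf z,\mathbf w,\zeta)\in\mathbb{C}^n\times\mathbb{C}^n\times\mathbb{C}$, $\zeta=\xi+i\eta$, put $$I_\lambda(\mathbf z,\mathbf w,\zeta)=\frac1{2\pi}\int_{\mathbb{R}}e^{2t(\lambda+\frac{i}{2}s)^2}e^{-2\eta(\lambda+\frac i2 s)}W_t^{\lambda+\frac i2 s}(\mathbf z,\mathbf w)\,ds .$$ Then: (i) $I_\lambda$ does not depend on $\lambda>0$; writing $W_t^+:=I_\lambda$, one has in particular $W_t^+(\mathbf z,\mathbf w,\zeta)=\lim_{\lambda\to0^+}I_\lambda(\mathbf z,\mathbf w,\zeta)$. (ii) For every $a>0$ and compact $Q\subseteq\mathbb{C}^{2n}$ there is $C=C(Q,a)>0$ such that for all $\varepsilon\in[a^{-1},a]$ and $\xi\in\mathbb{R}$, $\sup_{(\mathbf z,\mathbf w)\in Q}\int_{\mathbb{R}}\big|e^{2\varepsilon\eta}W_t^+(\mathbf z,\mathbf w,\xi+i\eta)\big|\,d\eta\le C .$ (iii) For every $\lambda>0$: $W_t^\lambda(\mathbf z,\mathbf w)=e^{-2t\lambda^2}\int_{\mathbb{R}}e^{2\eta\lambda}W_t^+(\mathbf z,\mathbf w,i\eta)\,d\eta$. (iv) $W_t^+$ is real valued and left $\mathbb H$-invariant: $W_t^+(hg)=W_t^+(g)$ for all $h\in\mathbb H$, $g\in\mathbb H_{\mathbb C}$.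
   Context: For $\mathbf a,\mathbf b\in\mathbb{C}^n$, $\mathbf a\cdot\mathbf b=\sum a_jb_j$. For $\mu\in\mathbb{C}$ with $\mathrm{Re}\,\mu>0$ and $r>0$ let $p_r^\mu(\mathbf z,\mathbf w)=(4\pi)^{-n}\big(\frac{\mu}{\sinh(r\mu)}\big)^n\exp\big(-\frac{\mu}{4}\coth(r\mu)(\mathbf z\cdot\mathbf z+\mathbf w\cdot\mathbf w)\big)$ and $W_t^\mu(\mathbf x+i\mathbf y,\mathbf u+i\mathbf v)=4^ne^{\mu(\mathbf u\cdot\mathbf y-\mathbf v\cdot\mathbf x)}p_{2t}^\mu(2\mathbf y,2\mathbf v)$ for $\mathbf x,\mathbf y,\mathbf u,\mathbf v\in\mathbb{R}^n$ (the integral defining $I_\lambda$ converges absolutely). $\mathbb H=\mathbb{R}^n\times\mathbb{R}^n\times\mathbb{R}$ with product $(\mathbf x,\mathbf u,\xi)(\mathbf x',\mathbf u',\xi')=(\mathbf x+\mathbf x',\mathbf u+\mathbf u',\xi+\xi'+\frac12(\mathbf u\cdot\mathbf x'-\mathbf x\cdot\mathbf u'))$; $\mathbb H_{\mathbb C}=\mathbb{C}^n\times\mathbb{C}^n\times\mathbb{C}$ with the same product formula, on which $\mathbb H$ acts by left multiplication. *)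

theory Defs
  imports "HOL-Analysis.Analysis"
begin

definition cdot :: "complex^'n \<Rightarrow> complex^'n \<Rightarrow> complex" where
  "cdot a b = (\<Sum>j\<in>UNIV. a$j * b$j)"

definition ccoth :: "complex \<Rightarrow> complex" where
  "ccoth x = cosh x / sinh x"

definition re_vec :: "complex^'n \<Rightarrow> real^'n" where
  "re_vec z = (\<chi> j. Re (z$j))"

definition im_vec :: "complex^'n \<Rightarrow> real^'n" where
  "im_vec z = (\<chi> j. Im (z$j))"

definition cvec :: "real^'n \<Rightarrow> complex^'n" where
  "cvec y = (\<chi> j. complex_of_real (y$j))"

definition heatp :: "real \<Rightarrow> complex \<Rightarrow> complex^'n \<Rightarrow> complex^'n \<Rightarrow> complex" where
  "heatp r \<mu> z w =
     inverse ((4 * complex_of_real pi) ^ CARD('n))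
     * (\<mu> / sinh (complex_of_real r * \<mu>)) ^ CARD('n)
     * exp (- (\<mu> / 4) * ccoth (complex_of_real r * \<mu>) * (cdot z z + cdot w w))"

definition Wt :: "real \<Rightarrow> complex \<Rightarrow> complex^'n \<Rightarrow> complex^'n \<Rightarrow> complex" where
  "Wt t \<mu> z w =
     4 ^ CARD('n)
     * exp (\<mu> * complex_of_real (re_vec w \<bullet> im_vec z - im_vec w \<bullet> re_vec z))
     * heatp (2 * t) \<mu> (cvec (2 *\<^sub>R im_vec z)) (cvec (2 *\<^sub>R im_vec w))"

definition Ilam :: "real \<Rightarrow> real \<Rightarrow> complex^'n \<Rightarrow> complex^'n \<Rightarrow> complex \<Rightarrow> complex" where
  "Ilam t lam z w \<zeta> =
     complex_of_real (inverse (2 * pi)) *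
     integral\<^sup>L lborel (\<lambda>s::real.
        let \<mu> = complex_of_real lam + \<i> * complex_of_real (s / 2) in
        exp (2 * complex_of_real t * \<mu>^2) * exp (- 2 * complex_of_real (Im \<zeta>) * \<mu>) * Wt t \<mu> z w)"

text \<open>W_t^+ := I_lambda (taken at lambda = 1; part (i) shows independence of lambda).\<close>
definition Wplus :: "real \<Rightarrow> complex^'n \<Rightarrow> complex^'n \<Rightarrow> complex \<Rightarrow> complex" where
  "Wplus t z w \<zeta> = Ilam t 1 z w \<zeta>"

definition heis_mult :: "(complex^'n) \<times> (complex^'n) \<times> complex \<Rightarrow> (complex^'n) \<times> (complex^'n) \<times> complex
                         \<Rightarrow> (complex^'n) \<times> (complex^'n) \<times> complex" where
  "heis_mult g g' = (case g of (x, u, \<xi>) \<Rightarrow> case g' of (x', u', \<xi>') \<Rightarrow>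
      (x + x', u + u', \<xi> + \<xi>' + (cdot u x' - cdot x u') / 2))"

definition hreal :: "real^'n \<Rightarrow> real^'n \<Rightarrow> real \<Rightarrow> (complex^'n) \<times> (complex^'n) \<times> complex" where
  "hreal a b c = (cvec a, cvec b, complex_of_real c)"

end

theory Submission
  imports Defs "HOL-Complex_Analysis.Complex_Analysis" "HOL-Probability.Probability" "HOL-Real_Asymp.Real_Asymp"
begin
lemma gauss_integrable:
  assumes c: "c > 0"
  shows "integrable lborel (\<lambda>s::real. exp (-c * s^2))"
proof -
  have "integrable lborel (\<lambda>x. std_normal_density x)"
    using integrable_std_normal_moment[of 0] by simp
  then have "integrable lborel (\<lambda>x. std_normal_density (0 + sqrt (2*c) * x))"
    using c by (intro lborel_integrable_real_affine) auto
  then have "integrable lborel (\<lambda>x. sqrt (2*pi) * std_normal_density (sqrt (2*c) * x))"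
    by simp
  moreover have "sqrt (2*pi) * std_normal_density (sqrt (2*c) * x) = exp (-c * x^2)" for x
    using c by (simp add: std_normal_density_def power_mult_distrib)
  ultimately show ?thesis by simp
qed

lemma bounded_gauss_integrable:
  fixes g :: "real \<Rightarrow> complex"
  assumes "continuous_on UNIV g" "c > 0" "\<And>s. norm (g s) \<le> C * exp (-c * s^2)"
  shows "integrable lborel g"
proof (rule Bochner_Integration.integrable_bound)
  show "integrable lborel (\<lambda>s. C * exp (-c * s^2))"
    using gauss_integrable[OF assms(2)] by simp
  show "g \<in> borel_measurable lborel"
    using assms(1) borel_measurable_continuous_onI by simp
  show "AE x in lborel. norm (g x) \<le> norm (C * exp (-c * x^2))"
    using assms(3) by (auto intro: order_trans[OF _ abs_ge_self])
qed

lemma integral_interval_tendsto: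
  fixes g :: "real \<Rightarrow> complex"
  assumes int: "integrable lborel g"
  shows "(\<lambda>n::nat. integral {-real n..real n} g) \<longlonglongrightarrow> integral\<^sup>L lborel g"
proof -
  have si: "set_integrable lborel {-real n..real n} g" for n
    unfolding set_integrable_def by (rule integrable_mult_indicator) (auto simp: int)
  have eq: "integral {-real n..real n} g = integral\<^sup>L lborel (\<lambda>x. indicator {-real n..real n} x *\<^sub>R g x)" for n
    using set_borel_integral_eq_integral(2)[OF si[of n]] by (simp add: set_lebesgue_integral_def)
  have "(\<lambda>n. integral\<^sup>L lborel (\<lambda>x. indicator {-real n..real n} x *\<^sub>R g x)) \<longlonglongrightarrow> integral\<^sup>L lborel g"
  proof (rule integral_dominated_convergence[where w="\<lambda>x. norm (g x)"])
    show "g \<in> borel_measurable lborel" using int by auto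
    show "(\<lambda>x. indicator {-real n..real n} x *\<^sub>R g x) \<in> borel_measurable lborel" for n
      using int by auto
    show "integrable lborel (\<lambda>x. norm (g x))" using int by auto
    show "AE x in lborel. (\<lambda>n. indicator {-real n..real n} x *\<^sub>R g x) \<longlonglongrightarrow> g x"
    proof (rule AE_I2)
      fix x :: real
      obtain N :: nat where N: "\<bar>x\<bar> \<le> real N" using real_arch_simple by blast
      have "eventually (\<lambda>n. indicator {-real n..real n} x *\<^sub>R g x = g x) sequentially"
        unfolding eventually_sequentially
        by (rule exI[of _ N]) (use N in \<open>auto simp: indicator_def\<close>)
      then show "(\<lambda>n. indicator {-real n..real n} x *\<^sub>R g x) \<longlonglongrightarrow> g x"
        by (rule tendsto_eventually)
    qed
    show "AE x in lborel. norm (indicator {-real n..real n} x *\<^sub>R g x) \<le> norm (g x)" for n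
      by (auto simp: indicator_def)
  qed
  then show ?thesis by (simp add: eq)
qed

lemma vertical_has_contour:
  fixes f :: "complex \<Rightarrow> complex"
  assumes cont: "continuous_on {z. Re z = l} f" and T: "T > 0"
  shows "(f has_contour_integral (\<i> * integral {-T..T} (\<lambda>s. f (Complex l s))))
           (linepath (Complex l (-T)) (Complex l T))"
proof -
  let ?g = "\<lambda>s. f (Complex l s)"
  have "continuous_on UNIV (Complex l)"
    by (intro continuous_intros)
  then have cg: "continuous_on UNIV ?g"
    by (rule continuous_on_compose2[OF cont]) auto
  have "(?g has_integral integral {-T..T} ?g) (cbox (-T) T)"
    using integrable_continuous_interval[OF continuous_on_subset[OF cg]] by auto
  from has_integral_affinity'[OF this, of "2*T" "-T"] T
  have "((\<lambda>x. ?g (2*T*x - T)) has_integral ((inverse T / 2) *\<^sub>R integral {-T..T} ?g)) (cbox 0 1)"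
    by simp
  then have "((\<lambda>x. ?g (2*T*x - T) * (\<i> * (2*T))) has_integral ((inverse T / 2) *\<^sub>R integral {-T..T} ?g) * (\<i> * (2*T))) (cbox 0 1)"
    by (rule has_integral_mult_left)
  moreover have "((inverse T / 2) *\<^sub>R integral {-T..T} ?g) * (\<i> * (2*T)) = \<i> * integral {-T..T} ?g"
    using T by (simp add: scaleR_conv_of_real field_simps)
  moreover have "f (linepath (Complex l (-T)) (Complex l T) x) * (Complex l T - Complex l (-T)) = ?g (2*T*x - T) * (\<i> * (2*T))" for x
  proof -
    have "linepath (Complex l (-T)) (Complex l T) x = Complex l (2*T*x - T)"
      by (simp add: linepath_def complex_eq_iff algebra_simps)
    moreover have "Complex l T - Complex l (-T) = \<i> * (2*T)"
      by (simp add: complex_eq_iff)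
    ultimately show ?thesis by simp
  qed
  ultimately show ?thesis
    by (simp add: has_contour_integral_linepath)
qed

lemma contour_shift_le:
  fixes f :: "complex \<Rightarrow> complex" and c :: real
  assumes hol: "f holomorphic_on {z. 0 < Re z}" and c: "c > 0"
    and bd: "\<And>\<alpha> \<beta>. 0 < \<alpha> \<Longrightarrow> \<alpha> \<le> \<beta> \<Longrightarrow> \<exists>C. \<forall>z. \<alpha> \<le> Re z \<longrightarrow> Re z \<le> \<beta> \<longrightarrow> norm (f z) \<le> C * exp (-c * (Im z)^2)"
    and l1: "0 < l1" and l12: "l1 \<le> l2"
  shows "integral\<^sup>L lborel (\<lambda>s. f (Complex l1 s)) = integral\<^sup>L lborel (\<lambda>s. f (Complex l2 s))"
proof -
  define S where "S = {z. 0 < Re z}"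
  have l2: "0 < l2" using l1 l12 by linarith
  have contf: "continuous_on S f" using hol holomorphic_on_imp_continuous_on S_def by blast
  obtain C where C: "\<And>z. l1 \<le> Re z \<Longrightarrow> Re z \<le> l2 \<Longrightarrow> norm (f z) \<le> C * exp (-c * (Im z)^2)"
    using bd[OF l1 l12] by blast
  have C0: "C \<ge> 0"
  proof -
    have "norm (f (Complex l1 0)) \<le> C" using C[of "Complex l1 0"] l12 by simp
    then show ?thesis by (meson norm_ge_zero order_trans)
  qed
  have vcont: "continuous_on {z. Re z = l} f" if "l > 0" for l
    by (rule continuous_on_subset[OF contf]) (use that in \<open>auto simp: S_def\<close>)
  have gint: "integrable lborel (\<lambda>s. f (Complex l s))" if "l1 \<le> l" "l \<le> l2" for l
  proof (rule bounded_gauss_integrable[OF _ c])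
    have c1: "continuous_on UNIV (Complex l)" by (intro continuous_intros)
    have c2: "continuous_on {z. Re z = l} f" using that l1 by (intro vcont) auto
    show "continuous_on UNIV (\<lambda>s. f (Complex l s))"
      by (rule continuous_on_compose2[OF c2 c1]) auto
    show "norm (f (Complex l s)) \<le> C * exp (-c * s^2)" for s
      using C[of "Complex l s"] that by simp
  qed
  define J where "J l T = integral {-T..T} (\<lambda>s. f (Complex l s))" for l T
  have key: "norm (J l2 T - J l1 T) \<le> 2 * (l2 - l1) * (C * exp (-c * T^2))" if T: "T > 0" for T
  proof -
    define a1 a2 a3 a4 where "a1 = Complex l1 (-T)" and "a2 = Complex l2 (-T)"
      and "a3 = Complex l2 T" and "a4 = Complex l1 T"
    have segS: "closed_segment a b \<subseteq> S" if "a \<in> S" "b \<in> S" for a b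
      by (rule closed_segment_subset) (use that in \<open>auto simp: S_def convex_halfspace_Re_gt\<close>)
    have inS: "a1 \<in> S" "a2 \<in> S" "a3 \<in> S" "a4 \<in> S"
      using l1 l2 by (auto simp: S_def a1_def a2_def a3_def a4_def)
    have ci: "f contour_integrable_on linepath a b" if "a \<in> S" "b \<in> S" for a b
      by (rule contour_integrable_continuous_linepath, rule continuous_on_subset[OF contf segS[OF that]])
    define h1 h3 where "h1 = contour_integral (linepath a1 a2) f" and "h3 = contour_integral (linepath a3 a4) f"
    have H1: "(f has_contour_integral h1) (linepath a1 a2)"
      unfolding h1_def by (rule has_contour_integral_integral, rule ci) (use inS in auto)
    have H3: "(f has_contour_integral h3) (linepath a3 a4)"
      unfolding h3_def by (rule has_contour_integral_integral, rule ci) (use inS in auto)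
    have V2: "(f has_contour_integral (\<i> * J l2 T)) (linepath a2 a3)"
      unfolding J_def a2_def a3_def by (rule vertical_has_contour[OF vcont[OF l2] T])
    have V4': "(f has_contour_integral (\<i> * J l1 T)) (linepath a1 a4)"
      unfolding J_def a1_def a4_def by (rule vertical_has_contour[OF vcont[OF l1] T])
    have V4: "(f has_contour_integral (- (\<i> * J l1 T))) (linepath a4 a1)"
      using has_contour_integral_reversepath[OF valid_path_linepath V4'] by simp
    have "(f has_contour_integral (h1 + (\<i> * J l2 T + (h3 + - (\<i> * J l1 T)))))
            (linepath a1 a2 +++ (linepath a2 a3 +++ (linepath a3 a4 +++ linepath a4 a1)))"
      by (intro has_contour_integral_join H1 H3 V2 V4 valid_path_join valid_path_linepath) auto
    moreover have "(f has_contour_integral 0)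
            (linepath a1 a2 +++ (linepath a2 a3 +++ (linepath a3 a4 +++ linepath a4 a1)))"
    proof (rule Cauchy_theorem_convex_simple[OF _ _ _ _ ])
      show "f holomorphic_on S" using hol S_def by simp
      show "convex S" unfolding S_def by (rule convex_halfspace_Re_gt)
      show "valid_path (linepath a1 a2 +++ (linepath a2 a3 +++ (linepath a3 a4 +++ linepath a4 a1)))"
        by (intro valid_path_join valid_path_linepath) auto
      show "path_image (linepath a1 a2 +++ (linepath a2 a3 +++ (linepath a3 a4 +++ linepath a4 a1))) \<subseteq> S"
        using segS inS by (simp add: path_image_join)
      show "pathfinish (linepath a1 a2 +++ (linepath a2 a3 +++ (linepath a3 a4 +++ linepath a4 a1))) =
            pathstart (linepath a1 a2 +++ (linepath a2 a3 +++ (linepath a3 a4 +++ linepath a4 a1)))"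
        by simp
    qed
    ultimately have sum0: "h1 + (\<i> * J l2 T + (h3 + - (\<i> * J l1 T))) = 0"
      using has_contour_integral_unique by blast
    have B1: "norm h1 \<le> (C * exp (-c * T^2)) * norm (a2 - a1)"
    proof (rule has_contour_integral_bound_linepath[OF H1])
      show "0 \<le> C * exp (-c * T^2)" using C0 by simp
      fix x assume "x \<in> closed_segment a1 a2"
      then have "Im x = -T" "Re x \<in> closed_segment l1 l2"
        by (auto simp: a1_def a2_def closed_segment_same_Im)
      then show "norm (f x) \<le> C * exp (-c * T^2)"
        using C[of x] l12 by (auto simp: closed_segment_eq_real_ivl)
    qed
    have B3: "norm h3 \<le> (C * exp (-c * T^2)) * norm (a4 - a3)"
    proof (rule has_contour_integral_bound_linepath[OF H3])
      show "0 \<le> C * exp (-c * T^2)" using C0 by simp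
      fix x assume "x \<in> closed_segment a3 a4"
      then have "Im x = T" "Re x \<in> closed_segment l2 l1"
        by (auto simp: a3_def a4_def closed_segment_same_Im)
      then show "norm (f x) \<le> C * exp (-c * T^2)"
        using C[of x] l12 by (auto simp: closed_segment_eq_real_ivl split: if_splits)
    qed
    have n1: "norm (a2 - a1) = l2 - l1" and n3: "norm (a4 - a3) = l2 - l1"
      using l12 by (auto simp: a1_def a2_def a3_def a4_def norm_complex_def)
    have e: "\<i> * (J l2 T - J l1 T) = - (h1 + h3)"
      using sum0 by (simp add: algebra_simps eq_neg_iff_add_eq_0)
    have "norm (J l2 T - J l1 T) = norm (\<i> * (J l2 T - J l1 T))" by (simp add: norm_mult)
    also have "\<dots> = norm (- (h1 + h3))" using e by (simp only:)
    also have "\<dots> = norm (h1 + h3)" by (rule norm_minus_cancel)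
    also have "\<dots> \<le> norm h1 + norm h3" by (rule norm_triangle_ineq)
    finally have "norm (J l2 T - J l1 T) \<le> norm h1 + norm h3" .
    then show ?thesis using B1 B3 n1 n3 by (simp add: algebra_simps)
  qed
  have lim1: "(\<lambda>n::nat. J l2 (real n) - J l1 (real n)) \<longlonglongrightarrow>
      integral\<^sup>L lborel (\<lambda>s. f (Complex l2 s)) - integral\<^sup>L lborel (\<lambda>s. f (Complex l1 s))"
    unfolding J_def
    by (intro tendsto_diff integral_interval_tendsto gint) (use l12 in auto)
  have lim0: "(\<lambda>n::nat. J l2 (real n) - J l1 (real n)) \<longlonglongrightarrow> 0"
  proof (rule Lim_null_comparison)
    show "\<forall>\<^sub>F n in sequentially. norm (J l2 (real n) - J l1 (real n)) \<le> 2 * (l2 - l1) * (C * exp (-c * (real n)^2))"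
      unfolding eventually_sequentially by (rule exI[of _ 1]) (intro allI impI key, simp)
    have "(\<lambda>n::nat. exp (-c * (real n)^2)) \<longlonglongrightarrow> 0"
      using c by real_asymp
    then show "(\<lambda>n::nat. 2 * (l2 - l1) * (C * exp (-c * (real n)^2))) \<longlonglongrightarrow> 0"
      by (auto intro!: tendsto_mult_right_zero)
  qed
  from LIMSEQ_unique[OF lim1 lim0] show ?thesis by simp
qed

lemma gauss_fourier:
  assumes r: "r > 0"
  shows "(\<integral>\<eta>. exp (-(\<i> * complex_of_real (\<eta> * s))) * complex_of_real (exp (-(r^2/4) * \<eta>^2)) \<partial>lborel)
         = complex_of_real (2 * sqrt pi / r * exp (-(s^2/r^2)))"
proof -
  define c where "c = r / sqrt 2"
  define \<theta> where "\<theta> = - s / c"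
  have c: "c > 0" using r by (simp add: c_def)
  have "char std_normal_distribution \<theta> = complex_of_real (exp (- (\<theta>^2) / 2))"
    by (simp add: char_std_normal_distribution)
  moreover have "char std_normal_distribution \<theta> = (\<integral>x. std_normal_density x *\<^sub>R iexp (\<theta> * x) \<partial>lborel)"
    unfolding char_def by (subst integral_density) (auto simp: normal_density_nonneg)
  moreover have "(\<integral>x. std_normal_density x *\<^sub>R iexp (\<theta> * x) \<partial>lborel)
      = c *\<^sub>R (\<integral>y. std_normal_density (0 + c * y) *\<^sub>R iexp (\<theta> * (0 + c * y)) \<partial>lborel)"
    using lborel_integral_real_affine[of c "\<lambda>x. std_normal_density x *\<^sub>R iexp (\<theta> * x)" 0] c by simp
  moreover have "std_normal_density (0 + c * y) *\<^sub>R iexp (\<theta> * (0 + c * y))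
      = complex_of_real (1 / sqrt (2*pi)) * (exp (-(\<i> * complex_of_real (y * s))) * complex_of_real (exp (-(r^2/4) * y^2)))" for y
  proof -
    have "\<theta> * (0 + c * y) = - (y * s)" using c by (simp add: \<theta>_def)
    moreover have "(c*y)^2 / 2 = (r^2/4) * y^2" by (simp add: c_def power_mult_distrib power_divide)
    ultimately show ?thesis
      by (simp add: std_normal_density_def scaleR_conv_of_real mult_ac)
  qed
  ultimately have "complex_of_real (exp (- (\<theta>^2) / 2)) = c *\<^sub>R (complex_of_real (1 / sqrt (2*pi)) *
      (\<integral>\<eta>. exp (-(\<i> * complex_of_real (\<eta> * s))) * complex_of_real (exp (-(r^2/4) * \<eta>^2)) \<partial>lborel))"
    by simp
  moreover have "\<theta>^2 / 2 = s^2/r^2" using r by (simp add: \<theta>_def c_def power_divide power_mult_distrib)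
  ultimately have eq: "complex_of_real (exp (-(s^2/r^2))) = complex_of_real (c / sqrt (2*pi)) *
      (\<integral>\<eta>. exp (-(\<i> * complex_of_real (\<eta> * s))) * complex_of_real (exp (-(r^2/4) * \<eta>^2)) \<partial>lborel)"
    by (simp add: scaleR_conv_of_real)
  have k: "c / sqrt (2*pi) = r / (2 * sqrt pi)"
    by (simp add: c_def real_sqrt_mult)
  define I where "I = (\<integral>\<eta>. exp (-(\<i> * complex_of_real (\<eta> * s))) * complex_of_real (exp (-(r^2/4) * \<eta>^2)) \<partial>lborel)"
  have eq2: "complex_of_real (r / (2 * sqrt pi)) * I = complex_of_real (exp (-(s^2/r^2)))"
    using eq k by (simp add: I_def)
  have ab: "(2 * sqrt pi / r) * (r/(2 * sqrt pi)) = 1" using r by simp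
  have "I = complex_of_real ((2 * sqrt pi / r) * (r/(2 * sqrt pi))) * I" by (simp only: ab) simp
  also have "\<dots> = complex_of_real (2 * sqrt pi / r) * (complex_of_real (r/(2 * sqrt pi)) * I)"
    by (simp only: of_real_mult mult.assoc)
  also have "\<dots> = complex_of_real (2 * sqrt pi / r) * complex_of_real (exp (-(s^2/r^2)))"
    by (simp only: eq2)
  finally show ?thesis unfolding I_def by (simp only: of_real_mult)
qed

lemma norm_exp_i_real [simp]: "norm (exp (-(\<i> * complex_of_real x))) = 1"
  by (simp add: norm_exp_eq_Re)

lemma gauss_integral_sqrt_pi:
  "(\<integral>u. complex_of_real (exp (- (u^2))) \<partial>lborel) = complex_of_real (sqrt pi)"
  using gauss_fourier[of 2 0] by simp

lemma fourier_inv: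
  fixes G :: "real \<Rightarrow> complex"
  assumes cont: "continuous_on UNIV G" and c: "c > 0" and bd: "\<And>s. norm (G s) \<le> C * exp (-c * s^2)"
    and intF: "integrable lborel (\<lambda>\<eta>. \<integral>s. G s * exp (-(\<i> * complex_of_real (\<eta> * s))) \<partial>lborel)"
  shows "(\<integral>\<eta>. (\<integral>s. G s * exp (-(\<i> * complex_of_real (\<eta> * s))) \<partial>lborel) \<partial>lborel) = 2 * pi * G 0"
proof -
  define E where "E \<eta> s = exp (-(\<i> * complex_of_real (\<eta> * s)))" for \<eta> s :: real
  define Gh where "Gh \<eta> = (\<integral>s. G s * E \<eta> s \<partial>lborel)" for \<eta>
  define r where "r n = inverse (real (Suc n))" for n
  define q where "q n \<eta> = exp (-((r n)^2/4) * \<eta>^2)" for n \<eta>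
  have r0: "r n > 0" for n by (simp add: r_def)
  have Gm[measurable]: "G \<in> borel_measurable borel"
    using cont borel_measurable_continuous_onI by simp
  have Gint: "integrable lborel G" by (rule bounded_gauss_integrable[OF cont c bd])
  have C0: "C \<ge> 0"
  proof -
    have "norm (G 0) \<le> C" using bd[of 0] by simp
    then show ?thesis by (meson norm_ge_zero order_trans)
  qed
  have Gbd: "norm (G s) \<le> C" for s
  proof -
    have "exp (-c * s^2) \<le> 1" using c by simp
    then have "C * exp (-c * s^2) \<le> C" using C0 by (simp add: mult_left_le)
    then show ?thesis using bd[of s] by linarith
  qed
  have qint: "integrable lborel (q n)" for n
    unfolding q_def using gauss_integrable[of "(r n)^2/4"] r0[of n] by simp
  have q01: "0 < q n \<eta>" "q n \<eta> \<le> 1" for n \<eta>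
    by (auto simp: q_def)
  have Em[measurable]: "(\<lambda>(\<eta>, s). E \<eta> s) \<in> borel_measurable (lborel \<Otimes>\<^sub>M lborel)"
    unfolding E_def by measurable
  have stepA: "(\<integral>\<eta>. Gh \<eta> * complex_of_real (q n \<eta>) \<partial>lborel)
      = (\<integral>s. G s * complex_of_real (2 * sqrt pi / r n * exp (-(s^2/(r n)^2))) \<partial>lborel)" for n
  proof -
    define f where "f \<eta> s = G s * E \<eta> s * complex_of_real (q n \<eta>)" for \<eta> s
    have fm: "(\<lambda>(\<eta>, s). f \<eta> s) \<in> borel_measurable (lborel \<Otimes>\<^sub>M lborel)"
      unfolding f_def q_def using Em by measurable
    have nf: "norm (f \<eta> s) = q n \<eta> * norm (G s)" for \<eta> s
      using q01[of n \<eta>] by (simp add: f_def E_def norm_mult)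
    have fint: "integrable (lborel \<Otimes>\<^sub>M lborel) (\<lambda>(\<eta>, s). f \<eta> s)"
    proof (rule lborel_pair.Fubini_integrable)
      show "(\<lambda>(\<eta>, s). f \<eta> s) \<in> borel_measurable (lborel \<Otimes>\<^sub>M lborel)" by (rule fm)
      have "integrable lborel (\<lambda>\<eta>. q n \<eta> * (\<integral>s. norm (G s) \<partial>lborel))"
        using qint[of n] by simp
      then show "integrable lborel (\<lambda>\<eta>. \<integral>s. norm (case (\<eta>, s) of (\<eta>, s) \<Rightarrow> f \<eta> s) \<partial>lborel)"
        by (simp add: nf)
      show "AE \<eta> in lborel. integrable lborel (\<lambda>s. case (\<eta>, s) of (\<eta>, s) \<Rightarrow> f \<eta> s)"
      proof (rule AE_I2)
        fix \<eta>
        show "integrable lborel (\<lambda>s. case (\<eta>, s) of (\<eta>, s) \<Rightarrow> f \<eta> s)"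
        proof (rule Bochner_Integration.integrable_bound[OF Gint])
          show "(\<lambda>s. case (\<eta>, s) of (\<eta>, s) \<Rightarrow> f \<eta> s) \<in> borel_measurable lborel"
            using fm by measurable
          show "AE s in lborel. norm (case (\<eta>, s) of (\<eta>, s) \<Rightarrow> f \<eta> s) \<le> norm (G s)"
            using q01[of n \<eta>] by (auto simp: nf intro!: mult_left_le_one_le)
        qed
      qed
    qed
    have "(\<integral>\<eta>. Gh \<eta> * complex_of_real (q n \<eta>) \<partial>lborel) = (\<integral>\<eta>. (\<integral>s. f \<eta> s \<partial>lborel) \<partial>lborel)"
      by (simp add: Gh_def f_def)
    also have "\<dots> = (\<integral>s. (\<integral>\<eta>. f \<eta> s \<partial>lborel) \<partial>lborel)"
      using lborel_pair.Fubini_integral[OF fint] by simp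
    also have "\<dots> = (\<integral>s. G s * complex_of_real (2 * sqrt pi / r n * exp (-(s^2/(r n)^2))) \<partial>lborel)"
    proof (rule Bochner_Integration.integral_cong[OF refl])
      fix s
      have "(\<integral>\<eta>. f \<eta> s \<partial>lborel) = G s * (\<integral>\<eta>. E \<eta> s * complex_of_real (q n \<eta>) \<partial>lborel)"
        by (simp add: f_def mult.assoc)
      also have "(\<integral>\<eta>. E \<eta> s * complex_of_real (q n \<eta>) \<partial>lborel) = complex_of_real (2 * sqrt pi / r n * exp (-(s^2/(r n)^2)))"
        unfolding E_def q_def by (rule gauss_fourier[OF r0])
      finally show "(\<integral>\<eta>. f \<eta> s \<partial>lborel) = G s * complex_of_real (2 * sqrt pi / r n * exp (-(s^2/(r n)^2)))" .
    qed
    finally show ?thesis .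
  qed
  have rlim: "r \<longlonglongrightarrow> 0"
    unfolding r_def by (rule LIMSEQ_inverse_real_of_nat)
  have limA: "(\<lambda>n. \<integral>\<eta>. Gh \<eta> * complex_of_real (q n \<eta>) \<partial>lborel) \<longlonglongrightarrow> (\<integral>\<eta>. Gh \<eta> \<partial>lborel)"
  proof (rule integral_dominated_convergence[where w="\<lambda>\<eta>. norm (Gh \<eta>)"])
    have Ghi: "integrable lborel Gh" unfolding Gh_def[abs_def] E_def by (rule intF)
    then show "Gh \<in> borel_measurable lborel" by auto
    then show "(\<lambda>\<eta>. Gh \<eta> * complex_of_real (q n \<eta>)) \<in> borel_measurable lborel" for n
      unfolding q_def by measurable
    show "integrable lborel (\<lambda>\<eta>. norm (Gh \<eta>))" using Ghi by auto
    show "AE \<eta> in lborel. (\<lambda>n. Gh \<eta> * complex_of_real (q n \<eta>)) \<longlonglongrightarrow> Gh \<eta>"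
    proof (rule AE_I2)
      fix \<eta>
      have "(\<lambda>n. Gh \<eta> * complex_of_real (q n \<eta>)) \<longlonglongrightarrow> Gh \<eta> * complex_of_real (exp (-(0^2/4) * \<eta>^2))"
        unfolding q_def by (intro tendsto_intros rlim) auto
      then show "(\<lambda>n. Gh \<eta> * complex_of_real (q n \<eta>)) \<longlonglongrightarrow> Gh \<eta>" by simp
    qed
    show "AE \<eta> in lborel. norm (Gh \<eta> * complex_of_real (q n \<eta>)) \<le> norm (Gh \<eta>)" for n
    proof (rule AE_I2)
      fix \<eta>
      have "\<bar>q n \<eta>\<bar> \<le> 1" using q01[of n \<eta>] by simp
      then show "norm (Gh \<eta> * complex_of_real (q n \<eta>)) \<le> norm (Gh \<eta>)"
        by (simp add: norm_mult mult_left_le)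
    qed
  qed
  have stepC: "(\<integral>s. G s * complex_of_real (2 * sqrt pi / r n * exp (-(s^2/(r n)^2))) \<partial>lborel)
      = complex_of_real (2 * sqrt pi) * (\<integral>u. G (r n * u) * complex_of_real (exp (-(u^2))) \<partial>lborel)" for n
  proof -
    have "(\<integral>s. G s * complex_of_real (2 * sqrt pi / r n * exp (-(s^2/(r n)^2))) \<partial>lborel)
       = r n *\<^sub>R (\<integral>u. G (0 + r n * u) * complex_of_real (2 * sqrt pi / r n * exp (-((0 + r n * u)^2/(r n)^2))) \<partial>lborel)"
      by (subst lborel_integral_real_affine[where c="r n" and t=0]) (use r0[of n] in \<open>simp_all only: abs_of_pos less_irrefl not_False_eq_True\<close>)
    also have "\<dots> = r n *\<^sub>R (\<integral>u. complex_of_real (2 * sqrt pi / r n) * (G (r n * u) * complex_of_real (exp (-(u^2)))) \<partial>lborel)"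
      using r0[of n] by (intro arg_cong2[where f="(*\<^sub>R)"] refl Bochner_Integration.integral_cong)
         (simp_all add: power_mult_distrib mult_ac)
    also have "\<dots> = complex_of_real (2 * sqrt pi) * (\<integral>u. G (r n * u) * complex_of_real (exp (-(u^2))) \<partial>lborel)"
      using r0[of n] by (simp add: scaleR_conv_of_real)
    finally show ?thesis .
  qed
  have limC: "(\<lambda>n. \<integral>u. G (r n * u) * complex_of_real (exp (-(u^2))) \<partial>lborel) \<longlonglongrightarrow> (\<integral>u. G 0 * complex_of_real (exp (-(u^2))) \<partial>lborel)"
  proof (rule integral_dominated_convergence[where w="\<lambda>u. C * exp (-(u^2))"])
    show "(\<lambda>u. G 0 * complex_of_real (exp (-(u^2)))) \<in> borel_measurable lborel" by measurable
    show "(\<lambda>u. G (r n * u) * complex_of_real (exp (-(u^2)))) \<in> borel_measurable lborel" for n by measurable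
    show "integrable lborel (\<lambda>u. C * exp (-(u^2)))" using gauss_integrable[of 1] by simp
    show "AE u in lborel. (\<lambda>n. G (r n * u) * complex_of_real (exp (-(u^2)))) \<longlonglongrightarrow> G 0 * complex_of_real (exp (-(u^2)))"
    proof (rule AE_I2)
      fix u
      have "(\<lambda>n. r n * u) \<longlonglongrightarrow> 0 * u" by (intro tendsto_intros rlim)
      then have t0: "(\<lambda>n. r n * u) \<longlonglongrightarrow> 0" by simp
      have "isCont G 0" using cont by (simp add: continuous_on_eq_continuous_at)
      then have "(\<lambda>n. G (r n * u)) \<longlonglongrightarrow> G 0"
        by (rule isCont_tendsto_compose[OF _ t0])
      then show "(\<lambda>n. G (r n * u) * complex_of_real (exp (-(u^2)))) \<longlonglongrightarrow> G 0 * complex_of_real (exp (-(u^2)))"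
        by (intro tendsto_intros)
    qed
    show "AE u in lborel. norm (G (r n * u) * complex_of_real (exp (-(u^2)))) \<le> C * exp (-(u^2))" for n
    proof (rule AE_I2)
      fix u
      have "norm (G (r n * u)) * exp (-(u^2)) \<le> C * exp (-(u^2))"
        by (rule mult_right_mono[OF Gbd]) simp
      then show "norm (G (r n * u) * complex_of_real (exp (-(u^2)))) \<le> C * exp (-(u^2))"
        by (simp add: norm_mult)
    qed
  qed
  have "(\<integral>u. G 0 * complex_of_real (exp (-(u^2))) \<partial>lborel) = G 0 * complex_of_real (sqrt pi)"
    using gauss_integral_sqrt_pi by simp
  with limC have limC': "(\<lambda>n. \<integral>\<eta>. Gh \<eta> * complex_of_real (q n \<eta>) \<partial>lborel) \<longlonglongrightarrow> complex_of_real (2 * sqrt pi) * (G 0 * complex_of_real (sqrt pi))"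
    by (simp only: stepA stepC) (intro tendsto_intros)
  have "complex_of_real (2 * sqrt pi) * (G 0 * complex_of_real (sqrt pi)) = 2 * pi * G 0"
  proof -
    have "complex_of_real (2 * sqrt pi) * (G 0 * complex_of_real (sqrt pi)) = complex_of_real (2 * (sqrt pi * sqrt pi)) * G 0"
      by (simp only: of_real_mult mult_ac)
    also have "sqrt pi * sqrt pi = pi" by simp
    finally show ?thesis by simp
  qed
  with LIMSEQ_unique[OF limA limC'] show ?thesis by (simp add: Gh_def E_def)
qed

lemma norm_sinh_ge: "norm (sinh (w::complex)) \<ge> (exp (Re w) - exp (- Re w)) / 2"
proof -
  have "norm (exp w) - norm (exp (-w)) \<le> norm (exp w - exp (-w))" by (rule norm_triangle_ineq2)
  then show ?thesis by (simp add: sinh_def norm_exp_eq_Re norm_divide)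
qed

lemma norm_cosh_le: "norm (cosh (w::complex)) \<le> exp \<bar>Re w\<bar>"
proof -
  have "norm (exp w + exp (-w)) \<le> norm (exp w) + norm (exp (-w))" by (rule norm_triangle_ineq)
  also have "\<dots> \<le> 2 * exp \<bar>Re w\<bar>"
  proof -
    have "exp (Re w) \<le> exp \<bar>Re w\<bar>" "exp (- Re w) \<le> exp \<bar>Re w\<bar>" by auto
    moreover have "norm (exp w) = exp (Re w)" "norm (exp (-w)) = exp (- Re w)" by (simp_all add: norm_exp_eq_Re)
    ultimately show ?thesis by linarith
  qed
  finally show ?thesis by (simp add: cosh_def norm_divide)
qed

lemma sinh_lower_pos:
  fixes a x :: real
  assumes "0 < a" "a \<le> x"
  shows "0 < (exp a - exp (-a)) / 2" "(exp a - exp (-a)) / 2 \<le> (exp x - exp (-x)) / 2"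
proof -
  have e: "exp (-a) < exp a" "exp a \<le> exp x" "exp (-x) \<le> exp (-a)" using assms by auto
  show "0 < (exp a - exp (-a)) / 2" using e(1) by simp
  have "exp a - exp (-a) \<le> exp x - exp (-x)" using e by linarith
  then show "(exp a - exp (-a)) / 2 \<le> (exp x - exp (-x)) / 2" by simp
qed

lemma sinh_nonzero: "0 < Re w \<Longrightarrow> sinh (w::complex) \<noteq> 0"
proof
  assume "0 < Re w" "sinh w = 0"
  then have "(exp (Re w) - exp (- Re w)) / 2 \<le> 0" using norm_sinh_ge[of w] by simp
  with \<open>0 < Re w\<close> show False by simp
qed

lemma quad_bound: "(t::real) > 0 \<Longrightarrow> L * \<bar>y\<bar> - 2 * t * y^2 \<le> L^2 / (4*t) - t * y^2"
proof -
  assume t: "t > 0"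
  have "0 \<le> (2*t*\<bar>y\<bar> - L)^2" by simp
  then have "0 \<le> 4*t^2*y^2 - 4*t*L*\<bar>y\<bar> + L^2" by (simp add: power2_eq_square algebra_simps)
  then have "4*t*(L * \<bar>y\<bar> - t * y^2) \<le> L^2" by (simp add: power2_eq_square algebra_simps)
  then have "L * \<bar>y\<bar> - t * y^2 \<le> L^2 / (4*t)" using t by (simp add: field_simps)
  then show ?thesis by simp
qed

definition Psi :: "nat \<Rightarrow> real \<Rightarrow> real \<Rightarrow> real \<Rightarrow> complex \<Rightarrow> complex" where
  "Psi n t a \<rho> \<mu> = exp (2 * complex_of_real t * \<mu>^2) *
     (4 ^ n * exp (\<mu> * complex_of_real a) *
      (inverse ((4 * complex_of_real pi) ^ n) * (\<mu> / sinh (complex_of_real (2*t) * \<mu>)) ^ n *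
       exp (- (\<mu> / 4) * ccoth (complex_of_real (2*t) * \<mu>) * complex_of_real \<rho>)))"

lemma Psi_bound:
  assumes t: "t > 0" and \<alpha>: "0 < \<alpha>" "\<alpha> \<le> \<beta>" and KA: "0 \<le> KA" and KR: "0 \<le> KR"
  shows "\<exists>K. \<forall>a \<rho> \<mu>. \<bar>a\<bar> \<le> KA \<longrightarrow> 0 \<le> \<rho> \<longrightarrow> \<rho> \<le> KR \<longrightarrow> \<alpha> \<le> Re \<mu> \<longrightarrow> Re \<mu> \<le> \<beta> \<longrightarrow>
             norm (Psi n t a \<rho> \<mu>) \<le> K * exp (- t * (Im \<mu>)^2)"
proof -
  define s0 where "s0 = (exp (2*t*\<alpha>) - exp (-(2*t*\<alpha>))) / 2"
  have s0: "0 < s0" unfolding s0_def using t \<alpha> by simp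
  define kc where "kc = exp (2*t*\<beta>) / s0"
  have kc: "0 < kc" using s0 by (simp add: kc_def)
  define L where "L = real n + kc * KR / 4"
  define K0 where "K0 = exp (2*t*\<beta>^2) * 4^n * exp (\<beta>*KA) * inverse ((4*pi)^n) / s0^n"
  define K where "K = K0 * exp (L * \<beta> + L^2/(4*t))"
  show ?thesis
  proof (intro exI[of _ K] allI impI)
    fix a \<rho> :: real and \<mu> :: complex
    assume a: "\<bar>a\<bar> \<le> KA" and \<rho>: "0 \<le> \<rho>" "\<rho> \<le> KR" and x: "\<alpha> \<le> Re \<mu>" "Re \<mu> \<le> \<beta>"
    define x y where "x = Re \<mu>" and "y = Im \<mu>"
    have x0: "0 < x" using x \<alpha> by (simp add: x_def)
    have nmu: "norm \<mu> \<le> \<beta> + \<bar>y\<bar>"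
      using cmod_le[of \<mu>] x x0 by (simp add: x_def y_def)
    let ?w = "complex_of_real (2*t) * \<mu>"
    have Rew: "Re ?w = 2*t*x" by (simp add: x_def)
    have ns: "s0 \<le> norm (sinh ?w)"
    proof -
      have "s0 \<le> (exp (2*t*x) - exp (-(2*t*x))) / 2"
        unfolding s0_def using x t \<alpha> by (intro sinh_lower_pos(2)) (auto simp: x_def)
      also have "\<dots> \<le> norm (sinh ?w)" using norm_sinh_ge[of ?w, unfolded Rew] by linarith
      finally show ?thesis .
    qed
    have nc: "norm (cosh ?w) \<le> exp (2*t*\<beta>)"
    proof -
      have "norm (cosh ?w) \<le> exp \<bar>Re ?w\<bar>" by (rule norm_cosh_le)
      also have "\<bar>Re ?w\<bar> = 2*t*x" using Rew t x0 by simp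
      also have "exp (2*t*x) \<le> exp (2*t*\<beta>)" using t x by (simp add: x_def)
      finally show ?thesis .
    qed
    have ncoth: "norm (ccoth ?w) \<le> kc"
    proof -
      have "norm (ccoth ?w) = norm (cosh ?w) / norm (sinh ?w)" by (simp add: ccoth_def norm_divide)
      also have "\<dots> \<le> exp (2*t*\<beta>) / s0"
        by (rule frac_le) (use nc ns s0 in auto)
      finally show ?thesis by (simp add: kc_def)
    qed
    have N1: "norm (exp (2 * complex_of_real t * \<mu>^2)) = exp (2*t*x^2) * exp (-(2*t*y^2))"
      by (simp add: norm_exp_eq_Re x_def y_def power2_eq_square algebra_simps flip: exp_add)
    have N1': "norm (exp (2 * complex_of_real t * \<mu>^2)) \<le> exp (2*t*\<beta>^2) * exp (-(2*t*y^2))"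
    proof -
      have "x^2 \<le> \<beta>^2" using x x0 by (intro power_mono) (auto simp: x_def)
      then show ?thesis unfolding N1 using t by (intro mult_right_mono) auto
    qed
    have N3: "norm (exp (\<mu> * complex_of_real a)) \<le> exp (\<beta>*KA)"
    proof -
      have "x * a \<le> \<beta> * KA"
      proof -
        have "x * a \<le> x * \<bar>a\<bar>" using x0 by (intro mult_left_mono) auto
        also have "\<dots> \<le> \<beta> * KA" using x x0 a KA by (intro mult_mono) (auto simp: x_def)
        finally show ?thesis .
      qed
      then show ?thesis by (simp add: norm_exp_eq_Re x_def)
    qed
    have N5: "norm ((\<mu> / sinh ?w) ^ n) \<le> exp (real n * (\<beta> + \<bar>y\<bar>)) / s0^n"
    proof -
      have "norm ((\<mu> / sinh ?w) ^ n) = (norm \<mu> / norm (sinh ?w)) ^ n" by (simp add: norm_power norm_divide)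
      also have "\<dots> \<le> ((\<beta> + \<bar>y\<bar>) / s0) ^ n"
        by (intro power_mono frac_le) (use nmu ns s0 \<alpha> in auto)
      also have "\<dots> = (\<beta> + \<bar>y\<bar>) ^ n / s0 ^ n" by (simp add: power_divide)
      also have "(\<beta> + \<bar>y\<bar>) ^ n \<le> exp (\<beta> + \<bar>y\<bar>) ^ n"
      proof (rule power_mono)
        show "\<beta> + \<bar>y\<bar> \<le> exp (\<beta> + \<bar>y\<bar>)" using exp_ge_add_one_self[of "\<beta> + \<bar>y\<bar>"] by linarith
        show "0 \<le> \<beta> + \<bar>y\<bar>" using \<alpha> by simp
      qed
      also have "exp (\<beta> + \<bar>y\<bar>) ^ n = exp (real n * (\<beta> + \<bar>y\<bar>))" by (simp add: exp_of_nat_mult)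
      finally show ?thesis using s0 by (simp add: divide_right_mono)
    qed
    have N6: "norm (exp (- (\<mu> / 4) * ccoth ?w * complex_of_real \<rho>)) \<le> exp ((\<beta> + \<bar>y\<bar>) * kc * KR / 4)"
    proof -
      have "norm (exp (- (\<mu> / 4) * ccoth ?w * complex_of_real \<rho>)) = exp (Re (- (\<mu> / 4) * ccoth ?w * complex_of_real \<rho>))"
        by (simp add: norm_exp_eq_Re)
      also have "\<dots> \<le> exp (norm (- (\<mu> / 4) * ccoth ?w * complex_of_real \<rho>))"
        by (rule exp_le_cancel_iff[THEN iffD2], rule complex_Re_le_cmod)
      also have "norm (- (\<mu> / 4) * ccoth ?w * complex_of_real \<rho>) = norm \<mu> / 4 * norm (ccoth ?w) * \<rho>"
        using \<rho> by (simp add: norm_mult norm_divide)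
      also have "\<dots> \<le> (\<beta> + \<bar>y\<bar>) / 4 * kc * KR"
        by (intro mult_mono divide_right_mono) (use nmu ncoth \<rho> kc \<alpha> in auto)
      finally show ?thesis by (simp add: mult_ac)
    qed
    have "norm (Psi n t a \<rho> \<mu>) = norm (exp (2 * complex_of_real t * \<mu>^2)) *
       (4 ^ n * norm (exp (\<mu> * complex_of_real a)) *
        (inverse ((4 * pi) ^ n) * norm ((\<mu> / sinh ?w) ^ n) *
         norm (exp (- (\<mu> / 4) * ccoth ?w * complex_of_real \<rho>))))"
      unfolding Psi_def by (simp add: norm_mult norm_inverse norm_power)
    also have "\<dots> \<le> (exp (2*t*\<beta>^2) * exp (-(2*t*y^2))) *
       (4 ^ n * exp (\<beta>*KA) *
        (inverse ((4 * pi) ^ n) * (exp (real n * (\<beta> + \<bar>y\<bar>)) / s0^n) *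
         exp ((\<beta> + \<bar>y\<bar>) * kc * KR / 4)))"
      by (intro mult_mono N1' N3 N5 N6 mult_nonneg_nonneg) (use s0 in auto)
    also have "\<dots> = K0 * exp (L * (\<beta> + \<bar>y\<bar>) - 2*t*y^2)"
      by (simp add: K0_def L_def algebra_simps flip: exp_add exp_diff)
    also have "\<dots> \<le> K0 * exp (L * \<beta> + L^2/(4*t) - t*y^2)"
    proof -
      have "L * (\<beta> + \<bar>y\<bar>) - 2*t*y^2 \<le> L * \<beta> + L^2/(4*t) - t*y^2"
        using quad_bound[OF t, of L y] by (simp add: algebra_simps)
      then show ?thesis unfolding K0_def using s0 by (intro mult_left_mono) auto
    qed
    also have "\<dots> = K * exp (- t * (Im \<mu>)^2)"
      by (simp add: K_def y_def algebra_simps flip: exp_add exp_diff)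
    finally show "norm (Psi n t a \<rho> \<mu>) \<le> K * exp (- t * (Im \<mu>)^2)" .
  qed
qed

lemma sinh_complex_def: "sinh (x::complex) = (exp x - exp (-x)) / 2"
  by (simp add: sinh_def scaleR_conv_of_real field_simps)
lemma cosh_complex_def: "cosh (x::complex) = (exp x + exp (-x)) / 2"
  by (simp add: cosh_def scaleR_conv_of_real field_simps)
lemma sinh_holo: "(\<lambda>z. sinh (c * z :: complex)) holomorphic_on S"
  unfolding sinh_complex_def by (intro holomorphic_intros) auto
lemma cosh_holo: "(\<lambda>z. cosh (c * z :: complex)) holomorphic_on S"
  unfolding cosh_complex_def by (intro holomorphic_intros) auto

lemma Psi_holo:
  assumes t: "t > 0"
  shows "Psi n t a \<rho> holomorphic_on {z. 0 < Re z}"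
proof -
  have nz: "\<forall>z\<in>{z. 0 < Re z}. sinh (complex_of_real (2*t) * z) \<noteq> 0"
    using t by (auto intro!: sinh_nonzero)
  have "(\<lambda>\<mu>. exp (2 * complex_of_real t * \<mu>^2) *
     (4 ^ n * exp (\<mu> * complex_of_real a) *
      (inverse ((4 * complex_of_real pi) ^ n) * (\<mu> / sinh (complex_of_real (2*t) * \<mu>)) ^ n *
       exp (- (\<mu> / 4) * (cosh (complex_of_real (2*t) * \<mu>) / sinh (complex_of_real (2*t) * \<mu>)) * complex_of_real \<rho>))))
     holomorphic_on {z. 0 < Re z}"
    by (intro holomorphic_intros sinh_holo cosh_holo) (use nz in auto)
  then show ?thesis unfolding Psi_def[abs_def] ccoth_def .
qed

definition Aof :: "complex^'n \<Rightarrow> complex^'n \<Rightarrow> real" where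
  "Aof z w = re_vec w \<bullet> im_vec z - im_vec w \<bullet> re_vec z"
definition Rof :: "complex^'n \<Rightarrow> complex^'n \<Rightarrow> real" where
  "Rof z w = (2 *\<^sub>R im_vec z) \<bullet> (2 *\<^sub>R im_vec z) + (2 *\<^sub>R im_vec w) \<bullet> (2 *\<^sub>R im_vec w)"

lemma cdot_cvec: "cdot (cvec a) (cvec a) = complex_of_real (a \<bullet> a)"
  unfolding cdot_def cvec_def inner_vec_def by simp

lemma Phi_eq: "exp (2 * complex_of_real t * \<mu>^2) * Wt t \<mu> z w = Psi CARD('n) t (Aof z w) (Rof z w) \<mu>"
  for z w :: "complex^'n"
proof -
  have e: "cdot (cvec (2 *\<^sub>R im_vec z)) (cvec (2 *\<^sub>R im_vec z)) + cdot (cvec (2 *\<^sub>R im_vec w)) (cvec (2 *\<^sub>R im_vec w))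
     = complex_of_real (Rof z w)"
    unfolding cdot_cvec Rof_def by simp
  show ?thesis
    unfolding Wt_def heatp_def Psi_def Aof_def e by (simp only: mult.assoc)
qed

lemma Psi_exp_holo:
  assumes t: "t > 0"
  shows "(\<lambda>\<mu>. Psi n t a \<rho> \<mu> * exp (- 2 * complex_of_real \<eta> * \<mu>)) holomorphic_on {z. 0 < Re z}"
  by (intro holomorphic_intros Psi_holo[OF t])

lemma Psi_exp_bound:
  assumes t: "t > 0" and \<alpha>: "0 < \<alpha>" "\<alpha> \<le> \<beta>" and KA: "0 \<le> KA" and KR: "0 \<le> KR"
  shows "\<exists>K. \<forall>a \<rho> \<mu>. \<bar>a\<bar> \<le> KA \<longrightarrow> 0 \<le> \<rho> \<longrightarrow> \<rho> \<le> KR \<longrightarrow> \<alpha> \<le> Re \<mu> \<longrightarrow> Re \<mu> \<le> \<beta> \<longrightarrow>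
             norm (Psi n t a \<rho> \<mu> * exp (- 2 * complex_of_real \<eta> * \<mu>)) \<le> K * exp (- 2 * \<eta> * Re \<mu>) * exp (- t * (Im \<mu>)^2)"
proof -
  obtain K where K: "\<And>a \<rho> \<mu>. \<bar>a\<bar> \<le> KA \<Longrightarrow> 0 \<le> \<rho> \<Longrightarrow> \<rho> \<le> KR \<Longrightarrow> \<alpha> \<le> Re \<mu> \<Longrightarrow> Re \<mu> \<le> \<beta> \<Longrightarrow>
             norm (Psi n t a \<rho> \<mu>) \<le> K * exp (- t * (Im \<mu>)^2)"
    using Psi_bound[OF t \<alpha> KA KR, of n] by blast
  show ?thesis
  proof (intro exI[of _ K] allI impI)
    fix a \<rho> \<mu> assume h: "\<bar>a\<bar> \<le> KA" "0 \<le> \<rho>" "\<rho> \<le> KR" "\<alpha> \<le> Re \<mu>" "Re \<mu> \<le> \<beta>"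
    have "norm (Psi n t a \<rho> \<mu> * exp (- 2 * complex_of_real \<eta> * \<mu>)) = norm (Psi n t a \<rho> \<mu>) * exp (- 2 * \<eta> * Re \<mu>)"
      by (simp add: norm_mult norm_exp_eq_Re)
    also have "\<dots> \<le> K * exp (- t * (Im \<mu>)^2) * exp (- 2 * \<eta> * Re \<mu>)"
      by (rule mult_right_mono[OF K[OF h]]) simp
    finally show "norm (Psi n t a \<rho> \<mu> * exp (- 2 * complex_of_real \<eta> * \<mu>)) \<le> K * exp (- 2 * \<eta> * Re \<mu>) * exp (- t * (Im \<mu>)^2)"
      by (simp add: mult_ac)
  qed
qed

lemma Rof_nonneg: "0 \<le> Rof z w"
  unfolding Rof_def by simp

lemma Ilam_eq:
  fixes z w :: "complex^'n"
  shows "Ilam t lam z w \<zeta> = complex_of_real (inverse pi) *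
     (\<integral>u. Psi CARD('n) t (Aof z w) (Rof z w) (Complex lam u) * exp (- 2 * complex_of_real (Im \<zeta>) * Complex lam u) \<partial>lborel)"
proof -
  define F where "F \<mu> = Psi CARD('n) t (Aof z w) (Rof z w) \<mu> * exp (- 2 * complex_of_real (Im \<zeta>) * \<mu>)" for \<mu>
  have "Ilam t lam z w \<zeta> = complex_of_real (inverse (2 * pi)) * (\<integral>s. F (Complex lam (s/2)) \<partial>lborel)"
  proof -
    have "(let \<mu> = complex_of_real lam + \<i> * complex_of_real (s / 2) in
        exp (2 * complex_of_real t * \<mu>^2) * exp (- 2 * complex_of_real (Im \<zeta>) * \<mu>) * Wt t \<mu> z w)
        = F (Complex lam (s/2))" for s
    proof -
      have "complex_of_real lam + \<i> * complex_of_real (s / 2) = Complex lam (s/2)"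
        by (simp add: complex_eq_iff)
      then show ?thesis
        unfolding F_def Let_def Phi_eq[symmetric] by (simp add: mult_ac)
    qed
    then show ?thesis unfolding Ilam_def by simp
  qed
  also have "(\<integral>s. F (Complex lam (s/2)) \<partial>lborel) = 2 *\<^sub>R (\<integral>u. F (Complex lam ((0 + 2 * u)/2)) \<partial>lborel)"
    by (subst lborel_integral_real_affine[where c=2 and t=0]) simp_all
  also have "\<dots> = 2 * (\<integral>u. F (Complex lam u) \<partial>lborel)"
    by (simp add: scaleR_conv_of_real)
  finally show ?thesis by (simp add: F_def)
qed

lemma exp_abs_integrable:
  assumes c: "c > 0"
  shows "integrable lborel (\<lambda>\<eta>::real. exp (- c * \<bar>\<eta>\<bar>))"
proof -
  interpret p: prob_space "density lborel (exponential_density c)"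
    using prob_space_exponential_density[OF c] .
  have m: "exponential_density c \<in> borel_measurable lborel"
    by (simp add: exponential_density_def)
  have "(\<integral>\<^sup>+x. ennreal (exponential_density c x) \<partial>lborel) = 1"
    using p.emeasure_space_1 by (simp add: emeasure_density)
  then have i1: "integrable lborel (exponential_density c)"
    using m exponential_density_nonneg[OF c] by (intro integrableI_nonneg) auto
  then have i2: "integrable lborel (\<lambda>x. exponential_density c (0 + (-1) * x))"
    by (intro lborel_integrable_real_affine) auto
  have "integrable lborel (\<lambda>x. (1/c) * (exponential_density c x + exponential_density c (0 + (-1) * x)))"
    using i1 i2 by auto
  then show ?thesis
  proof (rule Bochner_Integration.integrable_bound)
    show "(\<lambda>\<eta>. exp (- c * \<bar>\<eta>\<bar>)) \<in> borel_measurable lborel" by measurable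
    show "AE x in lborel. norm (exp (- c * \<bar>x\<bar>)) \<le> norm ((1/c) * (exponential_density c x + exponential_density c (0 + (-1) * x)))"
    proof (rule AE_I2)
      fix x :: real
      have nn: "0 \<le> exponential_density c x" "0 \<le> exponential_density c (0 + (-1) * x)"
        using exponential_density_nonneg[OF c] by auto
      have "exp (- c * \<bar>x\<bar>) \<le> (1/c) * (exponential_density c x + exponential_density c (0 + (-1) * x))"
        using c nn by (cases "x < 0") (auto simp: exponential_density_def field_simps)
      then show "norm (exp (- c * \<bar>x\<bar>)) \<le> norm ((1/c) * (exponential_density c x + exponential_density c (0 + (-1) * x)))"
        using c nn by simp
    qed
  qed
qed

context
  fixes t :: real
  assumes t: "t > 0"
begin

definition FF :: "complex^'n \<Rightarrow> complex^'n \<Rightarrow> real \<Rightarrow> complex \<Rightarrow> complex" where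
  "FF z w \<eta> \<mu> = Psi CARD('n) t (Aof z w) (Rof z w) \<mu> * exp (- 2 * complex_of_real \<eta> * \<mu>)"

lemma FF_holo: "FF z w \<eta> holomorphic_on {z. 0 < Re z}"
  unfolding FF_def[abs_def] by (rule Psi_exp_holo[OF t])

lemma FF_cont_line: "l > 0 \<Longrightarrow> continuous_on UNIV (\<lambda>u. FF z w \<eta> (Complex l u))"
proof -
  assume l: "l > 0"
  have c2: "continuous_on {z. 0 < Re z} (FF z w \<eta>)"
    using FF_holo holomorphic_on_imp_continuous_on by blast
  have c1: "continuous_on UNIV (Complex l)" by (intro continuous_intros)
  show ?thesis by (rule continuous_on_compose2[OF c2 c1]) (use l in auto)
qed

lemma FF_bound:
  assumes "0 < \<alpha>" "\<alpha> \<le> \<beta>" "0 \<le> KA" "0 \<le> KR"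
  shows "\<exists>K\<ge>0. \<forall>(z::complex^'n) w \<eta> \<mu>. \<bar>Aof z w\<bar> \<le> KA \<longrightarrow> Rof z w \<le> KR \<longrightarrow> \<alpha> \<le> Re \<mu> \<longrightarrow> Re \<mu> \<le> \<beta> \<longrightarrow>
      norm (FF z w \<eta> \<mu>) \<le> K * exp (- 2 * \<eta> * Re \<mu>) * exp (- t * (Im \<mu>)^2)"
proof -
  obtain K where K: "\<And>a \<rho> \<mu>. \<bar>a\<bar> \<le> KA \<Longrightarrow> 0 \<le> \<rho> \<Longrightarrow> \<rho> \<le> KR \<Longrightarrow> \<alpha> \<le> Re \<mu> \<Longrightarrow> Re \<mu> \<le> \<beta> \<Longrightarrow>
             norm (Psi CARD('n) t a \<rho> \<mu>) \<le> K * exp (- t * (Im \<mu>)^2)"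
    using Psi_bound[OF t assms, of "CARD('n)"] by blast
  have K0: "K \<ge> 0"
  proof -
    have "norm (Psi CARD('n) t 0 0 (Complex \<alpha> 0)) \<le> K"
      using K[of 0 0 "Complex \<alpha> 0"] assms by simp
    then show ?thesis by (meson norm_ge_zero order_trans)
  qed
  show ?thesis
  proof (intro exI[of _ K] conjI K0 allI impI)
    fix z w :: "complex^'n" and \<eta> \<mu>
    assume h: "\<bar>Aof z w\<bar> \<le> KA" "Rof z w \<le> KR" "\<alpha> \<le> Re \<mu>" "Re \<mu> \<le> \<beta>"
    have "norm (FF z w \<eta> \<mu>) = norm (Psi CARD('n) t (Aof z w) (Rof z w) \<mu>) * exp (- 2 * \<eta> * Re \<mu>)"
      by (simp add: FF_def norm_mult norm_exp_eq_Re)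
    also have "\<dots> \<le> K * exp (- t * (Im \<mu>)^2) * exp (- 2 * \<eta> * Re \<mu>)"
      by (rule mult_right_mono[OF K]) (use h Rof_nonneg in auto)
    finally show "norm (FF z w \<eta> \<mu>) \<le> K * exp (- 2 * \<eta> * Re \<mu>) * exp (- t * (Im \<mu>)^2)"
      by (simp add: mult_ac)
  qed
qed

lemma FF_line_integrable: "l > 0 \<Longrightarrow> integrable lborel (\<lambda>u. FF z w \<eta> (Complex l u))"
proof -
  assume l: "l > 0"
  obtain K where K: "\<And>\<mu>. l \<le> Re \<mu> \<Longrightarrow> Re \<mu> \<le> l \<Longrightarrow>
      norm (FF z w \<eta> \<mu>) \<le> K * exp (- 2 * \<eta> * Re \<mu>) * exp (- t * (Im \<mu>)^2)"
    using FF_bound[OF l order_refl abs_ge_zero[of "Aof z w"] Rof_nonneg[of z w]] by blast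
  show ?thesis
  proof (rule bounded_gauss_integrable[OF FF_cont_line[OF l] t])
    show "norm (FF z w \<eta> (Complex l s)) \<le> (K * exp (- 2 * \<eta> * l)) * exp (- t * s^2)" for s
      using K[of "Complex l s"] by simp
  qed
qed

lemma Ilam_FF: "Ilam t lam z w \<zeta> = complex_of_real (inverse pi) * (\<integral>u. FF z w (Im \<zeta>) (Complex lam u) \<partial>lborel)"
  unfolding Ilam_eq FF_def ..

lemma Ilam_indep:
  assumes "0 < l1" "0 < l2"
  shows "Ilam t l1 z w \<zeta> = Ilam t l2 z w \<zeta>"
proof -
  have shift: "(\<integral>u. FF z w (Im \<zeta>) (Complex a u) \<partial>lborel) = (\<integral>u. FF z w (Im \<zeta>) (Complex b u) \<partial>lborel)"
    if "0 < a" "a \<le> b" for a b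
  proof (rule contour_shift_le[OF FF_holo t _ that])
    fix \<alpha> \<beta> :: real assume ab: "0 < \<alpha>" "\<alpha> \<le> \<beta>"
    obtain K where K0: "K \<ge> 0" and K: "\<And>\<mu>. \<alpha> \<le> Re \<mu> \<Longrightarrow> Re \<mu> \<le> \<beta> \<Longrightarrow>
      norm (FF z w (Im \<zeta>) \<mu>) \<le> K * exp (- 2 * Im \<zeta> * Re \<mu>) * exp (- t * (Im \<mu>)^2)"
      using FF_bound[OF ab abs_ge_zero[of "Aof z w"] Rof_nonneg[of z w]] by blast
    show "\<exists>C. \<forall>\<mu>. \<alpha> \<le> Re \<mu> \<longrightarrow> Re \<mu> \<le> \<beta> \<longrightarrow> norm (FF z w (Im \<zeta>) \<mu>) \<le> C * exp (- t * (Im \<mu>)^2)"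
    proof (intro exI[of _ "K * exp (2 * \<bar>Im \<zeta>\<bar> * \<beta>)"] allI impI)
      fix \<mu> assume h: "\<alpha> \<le> Re \<mu>" "Re \<mu> \<le> \<beta>"
      have "- 2 * Im \<zeta> * Re \<mu> \<le> 2 * \<bar>Im \<zeta>\<bar> * \<beta>"
      proof -
        have "- 2 * Im \<zeta> * Re \<mu> \<le> 2 * \<bar>Im \<zeta>\<bar> * \<bar>Re \<mu>\<bar>"
          by (simp add: abs_mult[symmetric] abs_le_iff)
        also have "\<dots> \<le> 2 * \<bar>Im \<zeta>\<bar> * \<beta>" using h ab by (intro mult_left_mono) auto
        finally show ?thesis .
      qed
      then have "K * exp (- 2 * Im \<zeta> * Re \<mu>) \<le> K * exp (2 * \<bar>Im \<zeta>\<bar> * \<beta>)"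
        using K0 by (intro mult_left_mono) auto
      then have "K * exp (- 2 * Im \<zeta> * Re \<mu>) * exp (- t * (Im \<mu>)^2) \<le> K * exp (2 * \<bar>Im \<zeta>\<bar> * \<beta>) * exp (- t * (Im \<mu>)^2)"
        by (intro mult_right_mono) auto
      with K[OF h] show "norm (FF z w (Im \<zeta>) \<mu>) \<le> K * exp (2 * \<bar>Im \<zeta>\<bar> * \<beta>) * exp (- t * (Im \<mu>)^2)"
        by linarith
    qed
  qed
  show ?thesis
  proof (cases "l1 \<le> l2")
    case True then show ?thesis using shift[OF assms(1) True] by (simp add: Ilam_FF)
  next
    case False then show ?thesis using shift[OF assms(2), of l1] by (simp add: Ilam_FF)
  qed
qed

lemma Wplus_eq: "l > 0 \<Longrightarrow> Wplus t z w \<zeta> = Ilam t l z w \<zeta>"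
  unfolding Wplus_def by (rule Ilam_indep) auto

lemma Ilam_bound:
  assumes "0 < \<alpha>" "\<alpha> \<le> \<beta>" "0 \<le> KA" "0 \<le> KR"
  shows "\<exists>M. \<forall>(z::complex^'n) w \<zeta> lam. \<bar>Aof z w\<bar> \<le> KA \<longrightarrow> Rof z w \<le> KR \<longrightarrow> \<alpha> \<le> lam \<longrightarrow> lam \<le> \<beta> \<longrightarrow>
      norm (Ilam t lam z w \<zeta>) \<le> M * exp (- 2 * Im \<zeta> * lam)"
proof -
  obtain K where K0: "K \<ge> 0" and K: "\<And>(z::complex^'n) w \<eta> \<mu>. \<bar>Aof z w\<bar> \<le> KA \<Longrightarrow> Rof z w \<le> KR \<Longrightarrow> \<alpha> \<le> Re \<mu> \<Longrightarrow> Re \<mu> \<le> \<beta> \<Longrightarrow>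
      norm (FF z w \<eta> \<mu>) \<le> K * exp (- 2 * \<eta> * Re \<mu>) * exp (- t * (Im \<mu>)^2)"
    using FF_bound[OF assms] by blast
  define Gt where "Gt = (\<integral>u. exp (- t * u^2) \<partial>lborel)"
  show ?thesis
  proof (intro exI[of _ "inverse pi * K * Gt"] allI impI)
    fix z w :: "complex^'n" and \<zeta> lam
    assume h: "\<bar>Aof z w\<bar> \<le> KA" "Rof z w \<le> KR" "\<alpha> \<le> lam" "lam \<le> \<beta>"
    have l: "lam > 0" using h assms by simp
    have "norm (Ilam t lam z w \<zeta>) = inverse pi * norm (\<integral>u. FF z w (Im \<zeta>) (Complex lam u) \<partial>lborel)"
      by (simp add: Ilam_FF norm_mult norm_inverse)
    also have "\<dots> \<le> inverse pi * (\<integral>u. norm (FF z w (Im \<zeta>) (Complex lam u)) \<partial>lborel)"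
      by (intro mult_left_mono integral_norm_bound) auto
    also have "(\<integral>u. norm (FF z w (Im \<zeta>) (Complex lam u)) \<partial>lborel) \<le> (\<integral>u. K * exp (- 2 * Im \<zeta> * lam) * exp (- t * u^2) \<partial>lborel)"
    proof (rule integral_mono)
      show "integrable lborel (\<lambda>u. norm (FF z w (Im \<zeta>) (Complex lam u)))"
        using FF_line_integrable[OF l, of z w "Im \<zeta>"] by (rule integrable_norm)
      show "integrable lborel (\<lambda>u. K * exp (- 2 * Im \<zeta> * lam) * exp (- t * u^2))"
        using gauss_integrable[OF t] by auto
      show "norm (FF z w (Im \<zeta>) (Complex lam u)) \<le> K * exp (- 2 * Im \<zeta> * lam) * exp (- t * u^2)" for u
        using K[of z w "Complex lam u"] h by simp
    qed
    also have "(\<integral>u. K * exp (- 2 * Im \<zeta> * lam) * exp (- t * u^2) \<partial>lborel) = K * exp (- 2 * Im \<zeta> * lam) * Gt"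
      by (simp add: Gt_def)
    finally show "norm (Ilam t lam z w \<zeta>) \<le> inverse pi * K * Gt * exp (- 2 * Im \<zeta> * lam)"
      by (simp add: mult_ac)
  qed
qed

end

lemma cnj_sinh: "cnj (sinh z) = sinh (cnj z)"
  by (simp add: sinh_complex_def exp_cnj)
lemma cnj_cosh: "cnj (cosh z) = cosh (cnj z)"
  by (simp add: cosh_complex_def exp_cnj)

lemma Psi_cnj: "Psi n t a \<rho> (cnj \<mu>) = cnj (Psi n t a \<rho> \<mu>)"
  unfolding Psi_def ccoth_def
  by (simp add: exp_cnj cnj_sinh cnj_cosh)

context
  fixes t :: real
  assumes t: "t > 0"
begin

lemma FF_cnj: "FF t z w \<eta> (cnj \<mu>) = cnj (FF t z w \<eta> \<mu>)"
  unfolding FF_def[OF t] by (simp add: Psi_cnj exp_cnj)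

lemma Ilam_real: "Ilam t lam z w \<zeta> \<in> \<real>"
proof -
  define I where "I = (\<integral>u. FF t z w (Im \<zeta>) (Complex lam u) \<partial>lborel)"
  have "cnj I = (\<integral>u. cnj (FF t z w (Im \<zeta>) (Complex lam u)) \<partial>lborel)"
    by (simp add: I_def)
  also have "\<dots> = (\<integral>u. FF t z w (Im \<zeta>) (Complex lam (-u)) \<partial>lborel)"
  proof -
    have "cnj (Complex lam u) = Complex lam (-u)" for u by (simp add: complex_eq_iff)
    then show ?thesis by (simp add: FF_cnj[symmetric])
  qed
  also have "\<dots> = I"
    unfolding I_def
    by (subst (2) lborel_integral_real_affine[where c="-1" and t=0]) simp_all
  finally have "cnj I = I" .
  then have "I \<in> \<real>" by (simp add: Reals_cnj_iff)
  then show ?thesis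
    by (simp add: Ilam_FF[OF t] I_def)
qed

end

lemma im_vec_add_cvec: "im_vec (cvec a + z) = im_vec z"
  by (simp add: im_vec_def cvec_def vec_eq_iff)
lemma re_vec_add_cvec: "re_vec (cvec a + z) = a + re_vec z"
  by (simp add: re_vec_def cvec_def vec_eq_iff)
lemma Im_cdot_cvec: "Im (cdot (cvec b) z) = b \<bullet> im_vec z"
  by (simp add: cdot_def cvec_def im_vec_def inner_vec_def Im_sum)

lemma Psi_shift: "Psi n t (a + d) \<rho> \<mu> = Psi n t a \<rho> \<mu> * exp (\<mu> * complex_of_real d)"
proof -
  have "exp (\<mu> * complex_of_real (a + d)) = exp (\<mu> * complex_of_real a) * exp (\<mu> * complex_of_real d)"
    by (simp add: distrib_left exp_add)
  then show ?thesis unfolding Psi_def by (simp add: mult_ac)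
qed

context
  fixes t :: real
  assumes t: "t > 0"
begin

lemma FF_invariant:
  fixes a b :: "real^'n" and z w :: "complex^'n"
  shows "FF t (cvec a + z) (cvec b + w) (Im (complex_of_real c + \<zeta> + (cdot (cvec b) z - cdot (cvec a) w) / 2)) \<mu>
       = FF t z w (Im \<zeta>) \<mu>"
proof -
  define d where "d = b \<bullet> im_vec z - a \<bullet> im_vec w"
  have A: "Aof (cvec a + z) (cvec b + w) = Aof z w + d"
    unfolding Aof_def d_def im_vec_add_cvec re_vec_add_cvec
    by (simp add: inner_add_left inner_add_right inner_commute algebra_simps)
  have R: "Rof (cvec a + z) (cvec b + w) = Rof z w"
    unfolding Rof_def im_vec_add_cvec ..
  have I: "Im (complex_of_real c + \<zeta> + (cdot (cvec b) z - cdot (cvec a) w) / 2) = Im \<zeta> + d / 2"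
    by (simp add: Im_cdot_cvec d_def)
  have e: "exp (\<mu> * complex_of_real d) * exp (- 2 * complex_of_real (Im \<zeta> + d / 2) * \<mu>) = exp (- 2 * complex_of_real (Im \<zeta>) * \<mu>)"
  proof -
    have "\<mu> * complex_of_real d + - 2 * complex_of_real (Im \<zeta> + d / 2) * \<mu> = - 2 * complex_of_real (Im \<zeta>) * \<mu>"
      by (simp add: algebra_simps)
    then show ?thesis by (simp flip: exp_add)
  qed
  have "FF t (cvec a + z) (cvec b + w) (Im (complex_of_real c + \<zeta> + (cdot (cvec b) z - cdot (cvec a) w) / 2)) \<mu>
     = Psi CARD('n) t (Aof z w) (Rof z w) \<mu> * (exp (\<mu> * complex_of_real d) * exp (- 2 * complex_of_real (Im \<zeta> + d / 2) * \<mu>))"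
    unfolding FF_def[OF t] A R I Psi_shift by (rule mult.assoc)
  also have "\<dots> = FF t z w (Im \<zeta>) \<mu>"
    unfolding e FF_def[OF t] ..
  finally show ?thesis .
qed

lemma Wplus_invariant:
  "(case heis_mult (hreal a b c) g of (z, w, \<zeta>) \<Rightarrow> Wplus t z w \<zeta>) = (case g of (z, w, \<zeta>) \<Rightarrow> Wplus t z w \<zeta>)"
proof -
  obtain z w \<zeta> where g: "g = (z, w, \<zeta>)" by (cases g) auto
  show ?thesis
    unfolding g heis_mult_def hreal_def
    by (simp only: prod.case Wplus_def Ilam_FF[OF t] FF_invariant)
qed

end

context
  fixes t :: real
  assumes t: "t > 0"
begin

lemma exp_shift_identity:
  "exp (complex_of_real (2 * \<eta> * l)) * exp (- 2 * complex_of_real \<eta> * Complex l u) = exp (-(\<i> * complex_of_real ((2*\<eta>) * u)))"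
proof -
  have "complex_of_real (2 * \<eta> * l) + - 2 * complex_of_real \<eta> * Complex l u = -(\<i> * complex_of_real ((2*\<eta>) * u))"
    by (simp add: complex_eq_iff)
  then show ?thesis by (simp flip: exp_add)
qed

lemma part3:
  fixes z w :: "complex^'n"
  assumes l: "l > 0"
  shows "Wt t (complex_of_real l) z w =
         complex_of_real (exp (- 2 * t * l^2)) *
         integral\<^sup>L lborel (\<lambda>\<eta>::real. exp (complex_of_real (2 * \<eta> * l)) * Wplus t z w (\<i> * complex_of_real \<eta>))"
proof -
  define P where "P = Psi CARD('n) t (Aof z w) (Rof z w)"
  define G where "G u = P (Complex l u)" for u
  define Gh where "Gh \<eta> = (\<integral>u. G u * exp (-(\<i> * complex_of_real (\<eta> * u))) \<partial>lborel)" for \<eta>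
  have Pc: "continuous_on {z. 0 < Re z} P"
    unfolding P_def using Psi_holo[OF t] holomorphic_on_imp_continuous_on by blast
  have Gc: "continuous_on UNIV G"
  proof -
    have c1: "continuous_on UNIV (Complex l)" by (intro continuous_intros)
    show ?thesis unfolding G_def[abs_def] by (rule continuous_on_compose2[OF Pc c1]) (use l in auto)
  qed
  have Gm[measurable]: "G \<in> borel_measurable borel"
    using Gc borel_measurable_continuous_onI by simp
  obtain K where K: "\<And>\<mu>. l \<le> Re \<mu> \<Longrightarrow> Re \<mu> \<le> l \<Longrightarrow> norm (P \<mu>) \<le> K * exp (- t * (Im \<mu>)^2)"
    using Psi_bound[OF t l order_refl abs_ge_zero[of "Aof z w"] Rof_nonneg[of z w], of "CARD('n)"]
    unfolding P_def by (meson Rof_nonneg order_refl)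
  have Gb: "norm (G s) \<le> K * exp (- t * s^2)" for s
    using K[of "Complex l s"] by (simp add: G_def)
  have rel: "exp (complex_of_real (2 * \<eta> * l)) * Wplus t z w (\<i> * complex_of_real \<eta>)
      = complex_of_real (inverse pi) * Gh (2 * \<eta>)" for \<eta>
  proof -
    have "exp (complex_of_real (2 * \<eta> * l)) * Wplus t z w (\<i> * complex_of_real \<eta>)
        = complex_of_real (inverse pi) * (\<integral>u. exp (complex_of_real (2 * \<eta> * l)) * FF t z w \<eta> (Complex l u) \<partial>lborel)"
      by (simp add: Wplus_eq[OF t l] Ilam_FF[OF t])
    also have "(\<lambda>u. exp (complex_of_real (2 * \<eta> * l)) * FF t z w \<eta> (Complex l u)) = (\<lambda>u. G u * exp (-(\<i> * complex_of_real ((2*\<eta>) * u))))"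
    proof
      fix u
      have "exp (complex_of_real (2 * \<eta> * l)) * FF t z w \<eta> (Complex l u)
          = G u * (exp (complex_of_real (2 * \<eta> * l)) * exp (- 2 * complex_of_real \<eta> * Complex l u))"
        by (simp add: FF_def[OF t] G_def P_def mult_ac)
      also have "\<dots> = G u * exp (-(\<i> * complex_of_real ((2*\<eta>) * u)))"
        by (simp only: exp_shift_identity)
      finally show "exp (complex_of_real (2 * \<eta> * l)) * FF t z w \<eta> (Complex l u) = G u * exp (-(\<i> * complex_of_real ((2*\<eta>) * u)))" .
    qed
    finally show ?thesis by (simp add: Gh_def)
  qed
  have "\<exists>M. \<forall>(z'::complex^'n) w' \<zeta> lam. \<bar>Aof z' w'\<bar> \<le> \<bar>Aof z w\<bar> \<longrightarrow> Rof z' w' \<le> Rof z w \<longrightarrow> l/2 \<le> lam \<longrightarrow> lam \<le> 2*l \<longrightarrow>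
      norm (Ilam t lam z' w' \<zeta>) \<le> M * exp (- 2 * Im \<zeta> * lam)"
    using Ilam_bound[OF t, of "l/2" "2*l" "\<bar>Aof z w\<bar>" "Rof z w"] l Rof_nonneg[of z w] by simp
  then obtain M where M0: "\<forall>(z'::complex^'n) w' \<zeta> lam. \<bar>Aof z' w'\<bar> \<le> \<bar>Aof z w\<bar> \<longrightarrow> Rof z' w' \<le> Rof z w \<longrightarrow> l/2 \<le> lam \<longrightarrow> lam \<le> 2*l \<longrightarrow>
      norm (Ilam t lam z' w' \<zeta>) \<le> M * exp (- 2 * Im \<zeta> * lam)" by blast
  have M: "\<And>\<zeta> lam. l/2 \<le> lam \<Longrightarrow> lam \<le> 2*l \<Longrightarrow> norm (Ilam t lam z w \<zeta>) \<le> M * exp (- 2 * Im \<zeta> * lam)"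
    using M0 by blast
  have Ghb: "norm (Gh x) \<le> (pi * M) * exp (- (l/2) * \<bar>x\<bar>)" for x
  proof -
    have "Gh x = complex_of_real pi * (exp (complex_of_real (2 * (x/2) * l)) * Wplus t z w (\<i> * complex_of_real (x/2)))"
      using rel[of "x/2"] by simp
    then have ng: "norm (Gh x) = pi * (exp (x * l) * norm (Wplus t z w (\<i> * complex_of_real (x/2))))"
      by (simp add: norm_mult)
    show ?thesis
    proof (cases "x \<ge> 0")
      case True
      have "norm (Wplus t z w (\<i> * complex_of_real (x/2))) \<le> M * exp (- 2 * (x/2) * (2*l))"
        using M[of "2*l" "\<i> * complex_of_real (x/2)"] l by (simp add: Wplus_eq[OF t, of "2*l"])
      then have "exp (x * l) * norm (Wplus t z w (\<i> * complex_of_real (x/2))) \<le> exp (x * l) * (M * exp (- 2 * (x/2) * (2*l)))"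
        by (intro mult_left_mono) auto
      also have "\<dots> = M * exp (- (l/2) * \<bar>x\<bar>) * exp (- (l/2) * x)"
        using True by (simp add: mult_ac flip: exp_add)
      also have "\<dots> \<le> M * exp (- (l/2) * \<bar>x\<bar>)"
      proof -
        have "M \<ge> 0"
        proof -
          have "norm (Ilam t l z w 0) \<le> M * exp (- 2 * Im 0 * l)" using M[of l 0] l by simp
          then show ?thesis by (simp, meson norm_ge_zero order_trans)
        qed
        moreover have "exp (- (l/2) * x) \<le> 1" using True l by simp
        ultimately show ?thesis by (simp add: mult_left_le)
      qed
      finally show ?thesis unfolding ng by (simp add: mult_ac mult_left_mono)
    next
      case False
      have "norm (Wplus t z w (\<i> * complex_of_real (x/2))) \<le> M * exp (- 2 * (x/2) * (l/2))"
        using M[of "l/2" "\<i> * complex_of_real (x/2)"] l by (simp add: Wplus_eq[OF t, of "l/2"])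
      then have "exp (x * l) * norm (Wplus t z w (\<i> * complex_of_real (x/2))) \<le> exp (x * l) * (M * exp (- 2 * (x/2) * (l/2)))"
        by (intro mult_left_mono) auto
      also have "\<dots> = M * exp (- (l/2) * \<bar>x\<bar>)"
        using False by (simp add: mult_ac flip: exp_add)
      finally show ?thesis unfolding ng by (simp add: mult_ac mult_left_mono)
    qed
  qed
  have Ghm: "Gh \<in> borel_measurable lborel"
    unfolding Gh_def[abs_def] by measurable
  have Ghi: "integrable lborel Gh"
  proof (rule Bochner_Integration.integrable_bound[OF _ Ghm])
    show "integrable lborel (\<lambda>x. (pi * M) * exp (- (l/2) * \<bar>x\<bar>))"
      using exp_abs_integrable[of "l/2"] l by simp
    show "AE x in lborel. norm (Gh x) \<le> norm ((pi * M) * exp (- (l/2) * \<bar>x\<bar>))"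
      using Ghb by (auto intro: order_trans[OF _ abs_ge_self])
  qed
  have FI: "(\<integral>\<eta>. Gh \<eta> \<partial>lborel) = 2 * pi * G 0"
    using fourier_inv[OF Gc t Gb] Ghi unfolding Gh_def by simp
  have "(\<integral>\<eta>. Gh \<eta> \<partial>lborel) = 2 *\<^sub>R (\<integral>\<eta>. Gh (0 + 2 * \<eta>) \<partial>lborel)"
    using lborel_integral_real_affine[of 2 Gh 0] by simp
  then have half: "(\<integral>\<eta>. Gh (2 * \<eta>) \<partial>lborel) = pi * G 0"
    using FI by (simp add: scaleR_conv_of_real)
  have "integral\<^sup>L lborel (\<lambda>\<eta>::real. exp (complex_of_real (2 * \<eta> * l)) * Wplus t z w (\<i> * complex_of_real \<eta>))
      = complex_of_real (inverse pi) * (\<integral>\<eta>. Gh (2 * \<eta>) \<partial>lborel)"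
    by (simp only: rel integral_mult_right_zero)
  also have "\<dots> = G 0" using half by simp
  also have "G 0 = complex_of_real (exp (2 * t * l^2)) * Wt t (complex_of_real l) z w"
  proof -
    have "G 0 = exp (2 * complex_of_real t * (complex_of_real l)^2) * Wt t (complex_of_real l) z w"
    proof -
      have "Complex l 0 = complex_of_real l" by (simp add: complex_eq_iff)
      then show ?thesis unfolding G_def P_def Phi_eq[symmetric] by simp
    qed
    also have "exp (2 * complex_of_real t * (complex_of_real l)^2) = complex_of_real (exp (2 * t * l^2))"
      by (simp flip: exp_of_real)
    finally show ?thesis .
  qed
  finally have "integral\<^sup>L lborel (\<lambda>\<eta>::real. exp (complex_of_real (2 * \<eta> * l)) * Wplus t z w (\<i> * complex_of_real \<eta>))
      = complex_of_real (exp (2 * t * l^2)) * Wt t (complex_of_real l) z w" .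
  then show ?thesis
    by (simp add: mult.assoc[symmetric] flip: of_real_mult exp_add)
qed

end

lemma norm_re_vec_le: "norm (re_vec z) \<le> norm z"
  by (rule norm_le_componentwise_cart) (simp add: re_vec_def abs_Re_le_cmod)
lemma norm_im_vec_le: "norm (im_vec z) \<le> norm z"
  by (rule norm_le_componentwise_cart) (simp add: im_vec_def abs_Im_le_cmod)

lemma Aof_bound: "norm z \<le> B \<Longrightarrow> norm w \<le> B \<Longrightarrow> \<bar>Aof z w\<bar> \<le> 2 * B^2"
proof -
  assume zB: "norm z \<le> B" and wB: "norm w \<le> B"
  have B0: "0 \<le> B" using zB norm_ge_zero[of z] by linarith
  have "\<bar>Aof z w\<bar> \<le> \<bar>re_vec w \<bullet> im_vec z\<bar> + \<bar>im_vec w \<bullet> re_vec z\<bar>"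
    unfolding Aof_def by linarith
  also have "\<dots> \<le> norm (re_vec w) * norm (im_vec z) + norm (im_vec w) * norm (re_vec z)"
    by (intro add_mono Cauchy_Schwarz_ineq2)
  also have "\<dots> \<le> B * B + B * B"
  proof -
    have h: "norm (re_vec w) \<le> B" "norm (im_vec z) \<le> B" "norm (im_vec w) \<le> B" "norm (re_vec z) \<le> B"
      using norm_re_vec_le[of w] norm_im_vec_le[of z] norm_im_vec_le[of w] norm_re_vec_le[of z] zB wB by linarith+
    show ?thesis by (intro add_mono mult_mono h B0 norm_ge_zero)
  qed
  finally show ?thesis by (simp add: power2_eq_square)
qed

lemma Rof_bound: "norm z \<le> B \<Longrightarrow> norm w \<le> B \<Longrightarrow> Rof z w \<le> 8 * B^2"
proof -
  assume zB: "norm z \<le> B" and wB: "norm w \<le> B"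
  have B0: "0 \<le> B" using zB norm_ge_zero[of z] by linarith
  have "Rof z w = 4 * (norm (im_vec z))^2 + 4 * (norm (im_vec w))^2"
    unfolding Rof_def by (simp add: power2_norm_eq_inner)
  also have "\<dots> \<le> 4 * B^2 + 4 * B^2"
    using zB wB norm_im_vec_le[of z] norm_im_vec_le[of w]
    by (intro add_mono mult_left_mono power_mono) auto
  finally show ?thesis by simp
qed

context
  fixes t :: real
  assumes t: "t > 0"
begin

lemma part2:
  fixes Q :: "((complex^'n) \<times> (complex^'n)) set"
  assumes a: "a > 0" and Q: "compact Q"
  shows "\<exists>C::real. C > 0 \<and> (\<forall>\<epsilon>\<in>{inverse a..a}. \<forall>\<xi>::real. \<forall>(z, w)\<in>Q.
          (\<integral>\<^sup>+ \<eta>. ennreal (norm (exp (complex_of_real (2 * \<epsilon> * \<eta>)) * Wplus t z w (Complex \<xi> \<eta>))) \<partial>lborel)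
            \<le> ennreal C)"
proof (cases "a < 1")
  case True
  have "a * a < 1" using True a mult_strict_mono[of a 1 a 1] by simp
  then have "{inverse a..a} = {}" using a by (auto simp: field_simps)
  then show ?thesis by (intro exI[of _ 1]) auto
next
  case False
  then have a1: "1 \<le> a" by simp
  obtain B0 where B0: "\<forall>p\<in>Q. norm p \<le> B0"
    using compact_imp_bounded[OF Q] bounded_iff by blast
  define B where "B = \<bar>B0\<bar>"
  have zwB: "norm z \<le> B" "norm w \<le> B" if "(z, w) \<in> Q" for z w
    using B0 that norm_fst_le[of z w] norm_snd_le[of w z] unfolding B_def by force+
  have "1 \<le> a * a" using a1 mult_mono[of 1 a 1 a] by simp
  then have al: "0 < inverse a / 2" "inverse a / 2 \<le> 2 * a"
    using a a1 by (auto simp: field_simps)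
  have "\<exists>M. \<forall>(z::complex^'n) w \<zeta> lam. \<bar>Aof z w\<bar> \<le> 2 * B^2 \<longrightarrow> Rof z w \<le> 8 * B^2 \<longrightarrow> inverse a / 2 \<le> lam \<longrightarrow> lam \<le> 2 * a \<longrightarrow>
      norm (Ilam t lam z w \<zeta>) \<le> M * exp (- 2 * Im \<zeta> * lam)"
    by (rule Ilam_bound[OF t al]) auto
  then obtain M where M: "\<And>(z::complex^'n) w \<zeta> lam. \<bar>Aof z w\<bar> \<le> 2 * B^2 \<Longrightarrow> Rof z w \<le> 8 * B^2 \<Longrightarrow> inverse a / 2 \<le> lam \<Longrightarrow> lam \<le> 2 * a \<Longrightarrow>
      norm (Ilam t lam z w \<zeta>) \<le> M * exp (- 2 * Im \<zeta> * lam)" by blast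
  define M' where "M' = max M 0"
  define g where "g \<eta> = M' * exp (- inverse a * \<bar>\<eta>\<bar>)" for \<eta> :: real
  have gi: "integrable lborel g"
    unfolding g_def using exp_abs_integrable[of "inverse a"] a by simp
  have g0: "0 \<le> g \<eta>" for \<eta> by (simp add: g_def M'_def)
  have pw: "norm (exp (complex_of_real (2 * \<epsilon> * \<eta>)) * Wplus t z w (Complex \<xi> \<eta>)) \<le> g \<eta>"
    if e: "\<epsilon> \<in> {inverse a..a}" and zw: "(z, w) \<in> Q" for \<epsilon> \<xi> \<eta> z w
  proof -
    have eps: "inverse a \<le> \<epsilon>" "\<epsilon> \<le> a" using e by auto
    have e0: "0 < \<epsilon>" using eps a by (meson inverse_positive_iff_positive less_le_trans)
    have AB: "\<bar>Aof z w\<bar> \<le> 2 * B^2" and RB: "Rof z w \<le> 8 * B^2"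
      using Aof_bound[OF zwB[OF zw]] Rof_bound[OF zwB[OF zw]] by auto
    have n: "norm (exp (complex_of_real (2 * \<epsilon> * \<eta>)) * Wplus t z w (Complex \<xi> \<eta>)) = exp (2 * \<epsilon> * \<eta>) * norm (Wplus t z w (Complex \<xi> \<eta>))"
      by (simp add: norm_mult)
    have MM: "M \<le> M'" "0 \<le> M'" by (auto simp: M'_def)
    show ?thesis
    proof (cases "\<eta> \<ge> 0")
      case True
      have l1: "inverse a / 2 \<le> 2 * \<epsilon>" "2 * \<epsilon> \<le> 2 * a" using eps a e0 by auto
      have "norm (Wplus t z w (Complex \<xi> \<eta>)) \<le> M * exp (- 2 * \<eta> * (2 * \<epsilon>))"
      proof -
        have "Wplus t z w (Complex \<xi> \<eta>) = Ilam t (2 * \<epsilon>) z w (Complex \<xi> \<eta>)"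
          by (rule Wplus_eq[OF t]) (use e0 in simp)
        then show ?thesis using M[OF AB RB l1, of "Complex \<xi> \<eta>"] by simp
      qed
      also have "\<dots> \<le> M' * exp (- 2 * \<eta> * (2 * \<epsilon>))" using MM by (intro mult_right_mono) auto
      finally have "exp (2 * \<epsilon> * \<eta>) * norm (Wplus t z w (Complex \<xi> \<eta>)) \<le> exp (2 * \<epsilon> * \<eta>) * (M' * exp (- 2 * \<eta> * (2 * \<epsilon>)))"
        by (intro mult_left_mono) auto
      also have "\<dots> = M' * exp (- (2 * \<epsilon> * \<eta>))" by (simp add: mult_ac flip: exp_add)
      also have "\<dots> \<le> g \<eta>"
      proof -
        have "inverse a * \<eta> \<le> 2 * \<epsilon> * \<eta>" using True eps e0 by (intro mult_right_mono) auto
        then show ?thesis unfolding g_def using True MM by (intro mult_left_mono) auto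
      qed
      finally show ?thesis unfolding n .
    next
      case False
      have l1: "inverse a / 2 \<le> \<epsilon> / 2" "\<epsilon> / 2 \<le> 2 * a" using eps a e0 by auto
      have "norm (Wplus t z w (Complex \<xi> \<eta>)) \<le> M * exp (- 2 * \<eta> * (\<epsilon> / 2))"
      proof -
        have "Wplus t z w (Complex \<xi> \<eta>) = Ilam t (\<epsilon> / 2) z w (Complex \<xi> \<eta>)"
          by (rule Wplus_eq[OF t]) (use e0 in simp)
        then show ?thesis using M[OF AB RB l1, of "Complex \<xi> \<eta>"] by simp
      qed
      also have "\<dots> \<le> M' * exp (- 2 * \<eta> * (\<epsilon> / 2))" using MM by (intro mult_right_mono) auto
      finally have "exp (2 * \<epsilon> * \<eta>) * norm (Wplus t z w (Complex \<xi> \<eta>)) \<le> exp (2 * \<epsilon> * \<eta>) * (M' * exp (- 2 * \<eta> * (\<epsilon> / 2)))"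
        by (intro mult_left_mono) auto
      also have "\<dots> = M' * exp (\<epsilon> * \<eta>)" by (simp add: mult_ac flip: exp_add)
      also have "\<dots> \<le> g \<eta>"
      proof -
        have "\<epsilon> * (- \<eta>) \<ge> inverse a * (- \<eta>)" using False eps by (intro mult_right_mono) auto
        then show ?thesis unfolding g_def using False MM by (intro mult_left_mono) auto
      qed
      finally show ?thesis unfolding n .
    qed
  qed
  define C where "C = integral\<^sup>L lborel g + 1"
  have "0 \<le> integral\<^sup>L lborel g" by (rule Bochner_Integration.integral_nonneg) (simp add: g0)
  then have C0: "C > 0" unfolding C_def by simp
  show ?thesis
  proof (intro exI[of _ C] conjI C0 ballI allI)
    fix \<epsilon> \<xi> and p assume e: "\<epsilon> \<in> {inverse a..a}" and p: "p \<in> Q"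
    obtain z w where zw: "p = (z, w)" by (cases p)
    have "(\<integral>\<^sup>+ \<eta>. ennreal (norm (exp (complex_of_real (2 * \<epsilon> * \<eta>)) * Wplus t z w (Complex \<xi> \<eta>))) \<partial>lborel)
        \<le> (\<integral>\<^sup>+ \<eta>. ennreal (g \<eta>) \<partial>lborel)"
    proof (rule nn_integral_mono)
      fix \<eta>
      have "(z, w) \<in> Q" using p zw by simp
      then show "ennreal (norm (exp (complex_of_real (2 * \<epsilon> * \<eta>)) * Wplus t z w (Complex \<xi> \<eta>))) \<le> ennreal (g \<eta>)"
        by (intro ennreal_leI pw[OF e])
    qed
    also have "\<dots> = ennreal (integral\<^sup>L lborel g)"
      by (rule nn_integral_eq_integral[OF gi]) (rule AE_I2, rule g0)
    also have "\<dots> \<le> ennreal C" unfolding C_def by (intro ennreal_leI) simp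
    finally show "case p of (z, w) \<Rightarrow> (\<integral>\<^sup>+ \<eta>. ennreal (norm (exp (complex_of_real (2 * \<epsilon> * \<eta>)) * Wplus t z w (Complex \<xi> \<eta>))) \<partial>lborel) \<le> ennreal C"
      unfolding zw by simp
  qed
qed

end

theorem proposition6p3:
  fixes t :: real
  assumes "t > 0"
  shows
   "(\<forall>(z::complex^'n) w \<zeta>.
       (\<forall>l1 l2. l1 > 0 \<longrightarrow> l2 > 0 \<longrightarrow> Ilam t l1 z w \<zeta> = Ilam t l2 z w \<zeta>)
     \<and> (\<forall>l>0. Wplus t z w \<zeta> = Ilam t l z w \<zeta>)
     \<and> ((\<lambda>l. Ilam t l z w \<zeta>) \<longlongrightarrow> Wplus t z w \<zeta>) (at_right 0))
  \<and> (\<forall>a::real. a > 0 \<longrightarrow> (\<forall>Q::((complex^'n) \<times> (complex^'n)) set. compact Q \<longrightarrow>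
       (\<exists>C::real. C > 0 \<and> (\<forall>\<epsilon>\<in>{inverse a..a}. \<forall>\<xi>::real. \<forall>(z, w)\<in>Q.
          (\<integral>\<^sup>+ \<eta>. ennreal (norm (exp (complex_of_real (2 * \<epsilon> * \<eta>)) * Wplus t z w (Complex \<xi> \<eta>))) \<partial>lborel)
            \<le> ennreal C))))
  \<and> (\<forall>(z::complex^'n) w. \<forall>l::real. l > 0 \<longrightarrow>
       Wt t (complex_of_real l) z w =
         complex_of_real (exp (- 2 * t * l^2)) *
         integral\<^sup>L lborel (\<lambda>\<eta>::real. exp (complex_of_real (2 * \<eta> * l)) * Wplus t z w (\<i> * complex_of_real \<eta>)))
  \<and> (\<forall>(z::complex^'n) w \<zeta>. Wplus t z w \<zeta> \<in> \<real>)
  \<and> (\<forall>(a::real^'n) b c (g::(complex^'n) \<times> (complex^'n) \<times> complex).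
       (case heis_mult (hreal a b c) g of (z, w, \<zeta>) \<Rightarrow> Wplus t z w \<zeta>)
       = (case g of (z, w, \<zeta>) \<Rightarrow> Wplus t z w \<zeta>))"
proof -
  have t: "t > 0" by fact
  have c1: "\<forall>(z::complex^'n) w \<zeta>.
       (\<forall>l1 l2. l1 > 0 \<longrightarrow> l2 > 0 \<longrightarrow> Ilam t l1 z w \<zeta> = Ilam t l2 z w \<zeta>)
     \<and> (\<forall>l>0. Wplus t z w \<zeta> = Ilam t l z w \<zeta>)
     \<and> ((\<lambda>l. Ilam t l z w \<zeta>) \<longlongrightarrow> Wplus t z w \<zeta>) (at_right 0)"
  proof (intro allI)
    fix z w :: "complex^'n" and \<zeta> :: complex
    have A: "\<forall>l1 l2. l1 > 0 \<longrightarrow> l2 > 0 \<longrightarrow> Ilam t l1 z w \<zeta> = Ilam t l2 z w \<zeta>"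
      using Ilam_indep[OF t] by blast
    have B: "\<forall>l>0. Wplus t z w \<zeta> = Ilam t l z w \<zeta>"
      using Wplus_eq[OF t] by blast
    have "\<forall>\<^sub>F l in at_right 0. Ilam t l z w \<zeta> = Wplus t z w \<zeta>"
      using eventually_at_right_less[of "0::real"] by eventually_elim (simp add: Wplus_eq[OF t])
    then have C: "((\<lambda>l. Ilam t l z w \<zeta>) \<longlongrightarrow> Wplus t z w \<zeta>) (at_right 0)"
      by (rule tendsto_eventually)
    show "(\<forall>l1 l2. l1 > 0 \<longrightarrow> l2 > 0 \<longrightarrow> Ilam t l1 z w \<zeta> = Ilam t l2 z w \<zeta>)
     \<and> (\<forall>l>0. Wplus t z w \<zeta> = Ilam t l z w \<zeta>)
     \<and> ((\<lambda>l. Ilam t l z w \<zeta>) \<longlongrightarrow> Wplus t z w \<zeta>) (at_right 0)"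
      using A B C by blast
  qed
  have c2: "\<forall>a::real. a > 0 \<longrightarrow> (\<forall>Q::((complex^'n) \<times> (complex^'n)) set. compact Q \<longrightarrow>
       (\<exists>C::real. C > 0 \<and> (\<forall>\<epsilon>\<in>{inverse a..a}. \<forall>\<xi>::real. \<forall>(z, w)\<in>Q.
          (\<integral>\<^sup>+ \<eta>. ennreal (norm (exp (complex_of_real (2 * \<epsilon> * \<eta>)) * Wplus t z w (Complex \<xi> \<eta>))) \<partial>lborel)
            \<le> ennreal C)))"
    using part2[OF t] by blast
  have c3: "\<forall>(z::complex^'n) w. \<forall>l::real. l > 0 \<longrightarrow>
       Wt t (complex_of_real l) z w =
         complex_of_real (exp (- 2 * t * l^2)) *
         integral\<^sup>L lborel (\<lambda>\<eta>::real. exp (complex_of_real (2 * \<eta> * l)) * Wplus t z w (\<i> * complex_of_real \<eta>))"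
    using part3[OF t] by blast
  have c4: "\<forall>(z::complex^'n) w \<zeta>. Wplus t z w \<zeta> \<in> \<real>"
    unfolding Wplus_def using Ilam_real[OF t] by blast
  have c5: "\<forall>(a::real^'n) b c (g::(complex^'n) \<times> (complex^'n) \<times> complex).
       (case heis_mult (hreal a b c) g of (z, w, \<zeta>) \<Rightarrow> Wplus t z w \<zeta>)
       = (case g of (z, w, \<zeta>) \<Rightarrow> Wplus t z w \<zeta>)"
    using Wplus_invariant[OF t] by blast
  show ?thesis by (intro conjI c1 c2 c3 c4 c5)
qed

end
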